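(* Let $(X,\|\cdot\|,\tau)$ be a complete, C-sequential Saks space with mixed topology $\gamma$, and let $(A,D(A))$ be the generator of a $\tau$-bi-continuous semigroup $(T(t))_{t\ge0}$ on $X$. Then the following are equivalent: (a) $(T(t))_{t\ge0}$ is $\gamma$-equicontinuous. (b) There is a directed system $\Gamma_\gamma$ of continuous seminorms generating $\gamma$ such that $(A,D(A))$ is $\Gamma_\gamma$-dissipative.
   Context: $(X,\|\cdot\|)$ is a Banach space and $\tau$ a Hausdorff locally convex topology on $X$ coarser than the norm topology. The mixed topology $\gamma=\gamma(\|\cdot\|,\tau)$ is the finest linear topology on $X$ coinciding with $\tau$ on $\|\cdot\|$-bounded sets with $\tau\subseteq\gamma\subseteq\tau_{\|\cdot\|}$ (Hausdorff locally convex). $(X,\|\cdot\|,\tau)$ is a Saks space if $\tau$ is generated by a directed system $\Gamma_\tau$ of continuous seminorms with $\|x\|=\sup_{p\in\Gamma_\tau}p(x)$ for all $x$; it is complete if $(X,\gamma)$ is complete, and C-sequential if every convex sequentially open subset of $(X,\gamma)$ is open. A $\tau$-bi-continuous semigroup is a family $(T(t))_{t\ge0}$ of bounded operators with $T(0)=\mathrm{id}$, $T(t+s)=T(t)T(s)$, $t\mapsto T(t)x$ $\tau$-continuous for each $x$, $\|T(t)\|\le Me^{\omega t}$ for some $M\ge1$, $\omega\in\mathbb{R}$, and such that for every $\|\cdot\|$-bounded sequence $x_n\to x$ in $\tau$ one has $T(t)(x_n-x)\to0$ in $\tau$ locally uniformly in $t\ge0$. Its generator: $D(A)=\{x:\tau\text{-}\lim_{t\to0+}\frac{T(t)x-x}{t}\text{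 exists and }\sup_{t\in(0,1]}\frac{\|T(t)x-x\|}{t}<\infty\}$, $Ax$ this limit. $(T(t))$ is $\gamma$-equicontinuous if, for a directed system $\Gamma$ of continuous seminorms generating $\gamma$, for every $p\in\Gamma$ there are $\tilde p\in\Gamma$, $C\ge0$ with $p(T(t)x)\le C\tilde p(x)$ for all $t\ge0$, $x\in X$. $A$ is $\Gamma_\gamma$-dissipative if $p((\lambda-A)x)\ge\lambda p(x)$ for all $\lambda>0$, $x\in D(A)$, $p\in\Gamma_\gamma$. *)

theory Defs
  imports "HOL-Analysis.Analysis"
begin

definition seminorm :: "('a::real_vector \<Rightarrow> real) \<Rightarrow> bool" where
  "seminorm p \<longleftrightarrow> (\<forall>x y. p (x + y) \<le> p x + p y) \<and> (\<forall>c x. p (c *\<^sub>R x) = \<bar>c\<bar> * p x)"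

definition directed_seminorms :: "('a::real_vector \<Rightarrow> real) set \<Rightarrow> bool" where
  "directed_seminorms \<Gamma> \<longleftrightarrow> \<Gamma> \<noteq> {} \<and> (\<forall>p\<in>\<Gamma>. seminorm p) \<and>
     (\<forall>p\<in>\<Gamma>. \<forall>q\<in>\<Gamma>. \<exists>r\<in>\<Gamma>. \<forall>x. p x \<le> r x \<and> q x \<le> r x)"

definition seminorm_open :: "('a::real_vector \<Rightarrow> real) set \<Rightarrow> 'a set \<Rightarrow> bool" where
  "seminorm_open \<Gamma> S \<longleftrightarrow> (\<forall>x\<in>S. \<exists>F \<epsilon>. finite F \<and> F \<subseteq> \<Gamma> \<and> \<epsilon> > 0 \<and>
       (\<forall>y. (\<forall>p\<in>F. p (y - x) < \<epsilon>) \<longrightarrow> y \<in> S))"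

definition generates :: "('a::real_vector \<Rightarrow> real) set \<Rightarrow> 'a topology \<Rightarrow> bool" where
  "generates \<Gamma> \<sigma> \<longleftrightarrow> (\<forall>S. openin \<sigma> S \<longleftrightarrow> seminorm_open \<Gamma> S)"

definition saks_space :: "('a::real_normed_vector \<Rightarrow> real) set \<Rightarrow> 'a topology \<Rightarrow> bool" where
  "saks_space \<Gamma>\<tau> \<tau> \<longleftrightarrow> directed_seminorms \<Gamma>\<tau> \<and> generates \<Gamma>\<tau> \<tau> \<and>
     (\<forall>x. norm x = (SUP p\<in>\<Gamma>\<tau>. p x))"

definition linear_topology :: "'a::real_vector topology \<Rightarrow> bool" where
  "linear_topology \<sigma> \<longleftrightarrow> topspace \<sigma> = UNIV \<and>
     continuous_map (prod_topology \<sigma> \<sigma>) \<sigma> (\<lambda>(x, y). x + y) \<and>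
     continuous_map (prod_topology euclideanreal \<sigma>) \<sigma> (\<lambda>(c, x). c *\<^sub>R x)"

definition mixed_topology :: "'a::real_normed_vector topology \<Rightarrow> 'a topology \<Rightarrow> bool" where
  "mixed_topology \<tau> \<gamma> \<longleftrightarrow>
     linear_topology \<gamma> \<and> (\<forall>B. bounded B \<longrightarrow> subtopology \<gamma> B = subtopology \<tau> B) \<and>
     (\<forall>\<sigma>. linear_topology \<sigma> \<and> (\<forall>B. bounded B \<longrightarrow> subtopology \<sigma> B = subtopology \<tau> B)
           \<longrightarrow> (\<forall>S. openin \<sigma> S \<longrightarrow> openin \<gamma> S))"

definition tvs_complete :: "'a::real_vector topology \<Rightarrow> bool" where
  "tvs_complete \<gamma> \<longleftrightarrow> (\<forall>F. F \<noteq> bot \<and>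
       (\<forall>U. openin \<gamma> U \<and> 0 \<in> U \<longrightarrow> (\<forall>\<^sub>F (x, y) in F \<times>\<^sub>F F. x - y \<in> U))
       \<longrightarrow> (\<exists>x. limitin \<gamma> id x F))"

definition sequentially_open :: "'a topology \<Rightarrow> 'a set \<Rightarrow> bool" where
  "sequentially_open \<gamma> S \<longleftrightarrow> S \<subseteq> topspace \<gamma> \<and>
     (\<forall>xs x. x \<in> S \<and> limitin \<gamma> xs x sequentially \<longrightarrow> (\<forall>\<^sub>F n in sequentially. xs n \<in> S))"

definition C_sequential :: "'a::real_vector topology \<Rightarrow> bool" where
  "C_sequential \<gamma> \<longleftrightarrow> (\<forall>S. convex S \<and> sequentially_open \<gamma> S \<longrightarrow> openin \<gamma> S)"

definition bi_continuous_semigroup ::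
  "'a::real_normed_vector topology \<Rightarrow> (real \<Rightarrow> 'a \<Rightarrow> 'a) \<Rightarrow> bool" where
  "bi_continuous_semigroup \<tau> T \<longleftrightarrow>
     (\<forall>t\<ge>0. bounded_linear (T t)) \<and> T 0 = id \<and>
     (\<forall>t\<ge>0. \<forall>s\<ge>0. T (t + s) = T t \<circ> T s) \<and>
     (\<forall>x. continuous_map (top_of_set {0..}) \<tau> (\<lambda>t. T t x)) \<and>
     (\<exists>M \<omega>. M \<ge> 1 \<and> (\<forall>t\<ge>0. onorm (T t) \<le> M * exp (\<omega> * t))) \<and>
     (\<forall>xs x. bounded (range xs) \<and> limitin \<tau> xs x sequentially \<longrightarrow>
        (\<forall>t0\<ge>0. \<forall>U. openin \<tau> U \<and> 0 \<in> U \<longrightarrow>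
           (\<forall>\<^sub>F n in sequentially. \<forall>t\<in>{0..t0}. T t (xs n - x) \<in> U)))"

definition bi_generator ::
  "'a::real_normed_vector topology \<Rightarrow> (real \<Rightarrow> 'a \<Rightarrow> 'a) \<Rightarrow> 'a set \<Rightarrow> ('a \<Rightarrow> 'a) \<Rightarrow> bool" where
  "bi_generator \<tau> T D A \<longleftrightarrow>
     D = {x. (\<exists>y. limitin \<tau> (\<lambda>t. (1 / t) *\<^sub>R (T t x - x)) y (at_right 0)) \<and>
              bdd_above ((\<lambda>t. norm (T t x - x) / t) ` {0<..1})} \<and>
     (\<forall>x\<in>D. limitin \<tau> (\<lambda>t. (1 / t) *\<^sub>R (T t x - x)) (A x) (at_right 0))"

definition equicontinuous_semigroup ::
  "'a::real_vector topology \<Rightarrow> (real \<Rightarrow> 'a \<Rightarrow> 'a) \<Rightarrow> bool" where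
  "equicontinuous_semigroup \<gamma> T \<longleftrightarrow>
     (\<exists>\<Gamma>. directed_seminorms \<Gamma> \<and> generates \<Gamma> \<gamma> \<and>
        (\<forall>p\<in>\<Gamma>. \<exists>q\<in>\<Gamma>. \<exists>C\<ge>0. \<forall>t\<ge>0. \<forall>x. p (T t x) \<le> C * q x))"

definition dissipative_wrt :: "('a::real_vector \<Rightarrow> real) set \<Rightarrow> 'a set \<Rightarrow> ('a \<Rightarrow> 'a) \<Rightarrow> bool" where
  "dissipative_wrt \<Gamma> D A \<longleftrightarrow>
     (\<forall>l>0. \<forall>x\<in>D. \<forall>p\<in>\<Gamma>. p (l *\<^sub>R x - A x) \<ge> l * p x)"

end

theory Submission
  imports Defs "HOL-Analysis.Analysis"
begin


lemma sn_zero: "seminorm p \<Longrightarrow> p 0 = 0"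
  unfolding seminorm_def by (metis abs_zero mult_zero_left scaleR_zero_left)

lemma sn_scale: "seminorm p \<Longrightarrow> p (c *\<^sub>R x) = \<bar>c\<bar> * p x"
  unfolding seminorm_def by blast

lemma sn_add: "seminorm p \<Longrightarrow> p (x + y) \<le> p x + p y"
  unfolding seminorm_def by blast

lemma sn_minus: "seminorm p \<Longrightarrow> p (- x) = p x"
  using sn_scale[of p "-1" x] by simp

lemma sn_commute: "seminorm p \<Longrightarrow> p (x - y) = p (y - x)"
  using sn_minus[of p "y - x"] by simp

lemma sn_nonneg: "seminorm p \<Longrightarrow> p x \<ge> 0"
proof -
  assume s: "seminorm p"
  have "p (x + - x) \<le> p x + p (- x)" by (rule sn_add[OF s])
  then show ?thesis using sn_zero[OF s] sn_minus[OF s, of x] by simp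
qed

lemma sn_diff: "seminorm p \<Longrightarrow> p (x - y) \<le> p x + p y"
  using sn_add[of p x "- y"] sn_minus[of p y] by simp

lemma sn_tri: "seminorm p \<Longrightarrow> p (x - z) \<le> p (x - y) + p (y - z)"
  using sn_add[of p "x - y" "y - z"] by simp

lemma sn_rev: "seminorm p \<Longrightarrow> \<bar>p x - p y\<bar> \<le> p (x - y)"
proof -
  assume s: "seminorm p"
  have "p x \<le> p (x - y) + p y" using sn_add[OF s, of "x - y" y] by simp
  moreover have "p y \<le> p (y - x) + p x" using sn_add[OF s, of "y - x" x] by simp
  ultimately show ?thesis using sn_commute[OF s, of x y] by linarith
qed

lemma sn_sum: "seminorm p \<Longrightarrow> p (sum f S) \<le> sum (\<lambda>i. p (f i)) S"
proof (induction S rule: infinite_finite_induct)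
  case (infinite A) then show ?case using sn_zero[of p] by simp
next
  case empty then show ?case using sn_zero[of p] by simp
next
  case (insert x F)
  then show ?case using sn_add[of p "f x" "sum f F"] by simp
qed

lemma ds_sn: "directed_seminorms \<Gamma> \<Longrightarrow> p \<in> \<Gamma> \<Longrightarrow> seminorm p"
  unfolding directed_seminorms_def by blast

lemma limitinD: "limitin X f l F \<Longrightarrow> openin X U \<Longrightarrow> l \<in> U \<Longrightarrow> eventually (\<lambda>x. f x \<in> U) F"
  unfolding limitin_def by blast

lemma generatesD: "generates \<Gamma> \<sigma> \<Longrightarrow> openin \<sigma> S \<longleftrightarrow> seminorm_open \<Gamma> S"
  by (simp add: generates_def)

lemma seminorm_openD:
  assumes "seminorm_open \<Gamma> S" "x \<in> S"
  shows "\<exists>F \<epsilon>. finite F \<and> F \<subseteq> \<Gamma> \<and> \<epsilon> > 0 \<and> (\<forall>y. (\<forall>p\<in>F. p (y - x) < \<epsilon>) \<longrightarrow> y \<in> S)"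
  using assms unfolding seminorm_open_def by (rule bspec)

lemma seminorm_openE:
  assumes "seminorm_open \<Gamma> S" "x \<in> S"
  obtains F \<epsilon> where "finite F" "F \<subseteq> \<Gamma>" "\<epsilon> > 0" "\<forall>y. (\<forall>p\<in>F. p (y - x) < \<epsilon>) \<longrightarrow> y \<in> S"
  using seminorm_openD[OF assms] by (elim exE conjE) (rule that; assumption)

lemma sn_ball_open:
  assumes "\<forall>p\<in>\<Gamma>. seminorm p" "q \<in> \<Gamma>"
  shows "seminorm_open \<Gamma> {z. q (z - y) < e}"
  unfolding seminorm_open_def
proof (intro ballI)
  fix x assume "x \<in> {z. q (z - y) < e}"
  then have x: "q (x - y) < e" by simp
  have s: "seminorm q" using assms by blast
  show "\<exists>F \<epsilon>. finite F \<and> F \<subseteq> \<Gamma> \<and> \<epsilon> > 0 \<and> (\<forall>z. (\<forall>p\<in>F. p (z - x) < \<epsilon>) \<longrightarrow> z \<in> {z. q (z - y) < e})"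
  proof (intro exI conjI allI impI)
    show "finite {q}" "{q} \<subseteq> \<Gamma>" "e - q (x - y) > 0" using assms x by auto
    fix z assume "\<forall>p\<in>{q}. p (z - x) < e - q (x - y)"
    then have "q (z - x) < e - q (x - y)" by simp
    then show "z \<in> {z. q (z - y) < e}" using sn_tri[OF s, of z y x] by simp
  qed
qed

lemma generates_topspace: "generates \<Gamma> \<sigma> \<Longrightarrow> topspace \<sigma> = UNIV"
proof -
  assume g: "generates \<Gamma> \<sigma>"
  have "seminorm_open \<Gamma> UNIV" unfolding seminorm_open_def
    by (intro ballI exI[of _ "{}"] exI[of _ 1]) auto
  then have "openin \<sigma> UNIV" using generatesD[OF g] by simp
  then show ?thesis using openin_subset by blast
qed

lemma LIM_char:
  assumes g: "generates \<Gamma> \<sigma>" and s: "\<forall>p\<in>\<Gamma>. seminorm p"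
  shows "limitin \<sigma> f y F \<longleftrightarrow> (\<forall>q\<in>\<Gamma>. ((\<lambda>a. q (f a - y)) \<longlongrightarrow> 0) F)"
proof
  assume L: "limitin \<sigma> f y F"
  show "\<forall>q\<in>\<Gamma>. ((\<lambda>a. q (f a - y)) \<longlongrightarrow> 0) F"
  proof (intro ballI)
    fix q assume q: "q \<in> \<Gamma>"
    show "((\<lambda>a. q (f a - y)) \<longlongrightarrow> 0) F"
    proof (rule tendstoI)
      fix e :: real assume e: "e > 0"
      have "openin \<sigma> {z. q (z - y) < e}" using generatesD[OF g] sn_ball_open[OF s q] by simp
      moreover have "y \<in> {z. q (z - y) < e}" using sn_zero[of q] s q e by simp
      ultimately have "eventually (\<lambda>a. f a \<in> {z. q (z - y) < e}) F"
        by (rule limitinD[OF L])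
      then show "eventually (\<lambda>a. dist (q (f a - y)) 0 < e) F"
        by eventually_elim (use sn_nonneg[of q] s q in auto)
    qed
  qed
next
  assume R: "\<forall>q\<in>\<Gamma>. ((\<lambda>a. q (f a - y)) \<longlongrightarrow> 0) F"
  show "limitin \<sigma> f y F" unfolding limitin_def
  proof (intro conjI allI impI)
    show "y \<in> topspace \<sigma>" using generates_topspace[OF g] by simp
    fix U assume U: "openin \<sigma> U \<and> y \<in> U"
    have SU: "seminorm_open \<Gamma> U" using generatesD[OF g] U by simp
    obtain G e where G: "finite G" "G \<subseteq> \<Gamma>" "e > 0" "\<forall>z. (\<forall>p\<in>G. p (z - y) < e) \<longrightarrow> z \<in> U"
      by (rule seminorm_openE[OF SU conjunct2[OF U]])
    have "\<forall>p\<in>G. eventually (\<lambda>a. p (f a - y) < e) F"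
    proof
      fix p assume "p \<in> G"
      then have "((\<lambda>a. p (f a - y)) \<longlongrightarrow> 0) F" using R G by blast
      then show "eventually (\<lambda>a. p (f a - y) < e) F"
        using \<open>e > 0\<close> by (rule order_tendstoD)
    qed
    then have "eventually (\<lambda>a. \<forall>p\<in>G. p (f a - y) < e) F"
      using G(1) by (simp add: eventually_ball_finite)
    then show "eventually (\<lambda>a. f a \<in> U) F"
      by eventually_elim (use G in blast)
  qed
qed

lemma dom_open:
  assumes dom: "\<forall>p\<in>\<Gamma>'. \<exists>q\<in>\<Gamma>. \<exists>C>0. \<forall>x. p x \<le> C * q x"
    and S: "seminorm_open \<Gamma>' S"
  shows "seminorm_open \<Gamma> S"
  unfolding seminorm_open_def
proof
  fix x assume x: "x \<in> S"
  obtain F e where F: "finite F" "F \<subseteq> \<Gamma>'" "e > 0" "\<forall>y. (\<forall>p\<in>F. p (y - x) < e) \<longrightarrow> y \<in> S"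
    by (rule seminorm_openE[OF S x])
  have "\<exists>g. \<forall>p\<in>\<Gamma>'. g p \<in> \<Gamma> \<and> (\<exists>C>0. \<forall>x. p x \<le> C * g p x)"
    by (rule bchoice[OF dom[unfolded Bex_def]])
  then obtain g where g: "\<forall>p\<in>\<Gamma>'. g p \<in> \<Gamma> \<and> (\<exists>C>0. \<forall>x. p x \<le> C * g p x)"
    by (rule exE)
  have "\<forall>p\<in>\<Gamma>'. \<exists>C. C > 0 \<and> (\<forall>x. p x \<le> C * g p x)" using g by auto
  then have "\<exists>c. \<forall>p\<in>\<Gamma>'. c p > 0 \<and> (\<forall>x. p x \<le> c p * g p x)"
    by (rule bchoice)
  then obtain c where c: "\<forall>p\<in>\<Gamma>'. c p > 0 \<and> (\<forall>x. p x \<le> c p * g p x)"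
    by (rule exE)
  have gc: "\<forall>p\<in>\<Gamma>'. g p \<in> \<Gamma> \<and> c p > 0 \<and> (\<forall>x. p x \<le> c p * g p x)"
    using g c by auto
  define e' where "e' = e / (1 + sum c F)"
  have sc: "sum c F \<ge> 0" using gc F(2) by (intro sum_nonneg) (auto intro: less_imp_le)
  have e': "e' > 0" unfolding e'_def using sc F(3) by simp
  show "\<exists>F \<epsilon>. finite F \<and> F \<subseteq> \<Gamma> \<and> \<epsilon> > 0 \<and> (\<forall>y. (\<forall>p\<in>F. p (y - x) < \<epsilon>) \<longrightarrow> y \<in> S)"
  proof (intro exI conjI allI impI)
    show "finite (g ` F)" "g ` F \<subseteq> \<Gamma>" "e' > 0" using F gc e' by auto
    fix y assume y: "\<forall>p\<in>g ` F. p (y - x) < e'"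
    have "\<forall>p\<in>F. p (y - x) < e"
    proof
      fix p assume pF: "p \<in> F"
      have cp: "c p > 0" "c p \<le> sum c F" using gc F pF
        by (auto intro!: member_le_sum intro: less_imp_le)
      have "p (y - x) \<le> c p * g p (y - x)" using gc F pF by blast
      also have "\<dots> < c p * e'" using y pF cp by simp
      also have "\<dots> \<le> sum c F * e'" using cp e' by (simp add: mult_right_mono)
      also have "\<dots> < e" unfolding e'_def using sc F(3)
        by (simp add: field_simps)
      finally show "p (y - x) < e" .
    qed
    then show "y \<in> S" using F by blast
  qed
qed

lemma dom_generates:
  assumes g: "generates \<Gamma> \<sigma>"
    and d1: "\<forall>p\<in>\<Gamma>'. \<exists>q\<in>\<Gamma>. \<exists>C>0. \<forall>x. p x \<le> C * q x"
    and d2: "\<forall>p\<in>\<Gamma>. \<exists>q\<in>\<Gamma>'. \<exists>C>0. \<forall>x. p x \<le> C * q x"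
  shows "generates \<Gamma>' \<sigma>"
  unfolding generates_def using generatesD[OF g] dom_open[OF d1] dom_open[OF d2] by metis



locale SG =
  fixes Gt :: "('a::banach \<Rightarrow> real) set" and tau gam :: "'a topology"
    and T :: "real \<Rightarrow> 'a \<Rightarrow> 'a" and D :: "'a set" and A :: "'a \<Rightarrow> 'a"
  assumes saks: "saks_space Gt tau" and mixed: "mixed_topology tau gam"
    and compl: "tvs_complete gam" and bic: "bi_continuous_semigroup tau T"
    and gen: "bi_generator tau T D A"
begin

lemma saks_parts: "directed_seminorms Gt" "generates Gt tau" "\<forall>x. norm x = (SUP p\<in>Gt. p x)"
  using saks by (simp_all add: saks_space_def)

lemma Gt_sn: "q \<in> Gt \<Longrightarrow> seminorm q"
  using saks_parts(1) by (rule ds_sn)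

lemma Gt_all: "\<forall>q\<in>Gt. seminorm q" using Gt_sn by blast

lemma Gt_ne: "Gt \<noteq> {}"
  using saks_parts(1) by (simp add: directed_seminorms_def)

lemma gen_tau: "generates Gt tau"
  by (rule saks_parts(2))

lemma tau_lim: "limitin tau f y F \<longleftrightarrow> (\<forall>q\<in>Gt. ((\<lambda>a. q (f a - y)) \<longlongrightarrow> 0) F)"
  by (rule LIM_char[OF gen_tau Gt_all])

lemma norm_Sup: "norm x = (SUP q\<in>Gt. q x)"
  using saks_parts(3) by simp

lemma bdd_Gt: "bdd_above ((\<lambda>q. q x) ` Gt)"
proof (rule ccontr)
  assume nb: "\<not> bdd_above ((\<lambda>q. q x) ` Gt)"
  have nb2: "\<not> bdd_above ((\<lambda>q. q ((2::real) *\<^sub>R x)) ` Gt)"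
  proof
    assume "bdd_above ((\<lambda>q. q ((2::real) *\<^sub>R x)) ` Gt)"
    then obtain b where b: "\<forall>q\<in>Gt. q ((2::real) *\<^sub>R x) \<le> b" by (auto simp: bdd_above_def)
    have "\<forall>q\<in>Gt. q x \<le> b / 2" using b sn_scale[OF Gt_sn, of _ 2 x] by fastforce
    then have "bdd_above ((\<lambda>q. q x) ` Gt)" by (intro bdd_aboveI2[where M="b/2"]) blast
    then show False using nb by blast
  qed
  have eqS: "Sup S1 = Sup S2" if "\<not> bdd_above S1" "\<not> bdd_above S2" for S1 S2 :: "real set"
  proof -
    have "(\<lambda>z. \<forall>v\<in>S1. v \<le> z) = (\<lambda>z. \<forall>v\<in>S2. v \<le> z)"
    proof (rule ext)
      fix z
      have "\<not> (\<forall>v\<in>S1. v \<le> z)" using that(1) unfolding bdd_above_def by auto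
      moreover have "\<not> (\<forall>v\<in>S2. v \<le> z)" using that(2) unfolding bdd_above_def by auto
      ultimately show "(\<forall>v\<in>S1. v \<le> z) = (\<forall>v\<in>S2. v \<le> z)" by blast
    qed
    then show ?thesis unfolding Sup_real_def by simp
  qed
  have "norm x = norm ((2::real) *\<^sub>R x)"
    using norm_Sup[of x] norm_Sup[of "(2::real) *\<^sub>R x"] eqS[OF nb nb2] by simp
  then have "x = 0" by simp
  then have "bdd_above ((\<lambda>q. q x) ` Gt)" by (intro bdd_aboveI2[where M=0]) (metis Gt_sn order_refl sn_zero)
  then show False using nb by blast
qed

lemma q_le_norm: "q \<in> Gt \<Longrightarrow> q x \<le> norm x"
  unfolding norm_Sup[of x] by (rule cSUP_upper[OF _ bdd_Gt])

lemma norm_le_bound: "(\<And>q. q \<in> Gt \<Longrightarrow> q x \<le> b) \<Longrightarrow> norm x \<le> b"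
  unfolding norm_Sup[of x] by (rule cSUP_least[OF Gt_ne])

lemma sep: "(\<And>q. q \<in> Gt \<Longrightarrow> q z = 0) \<Longrightarrow> z = 0"
proof -
  assume h: "\<And>q. q \<in> Gt \<Longrightarrow> q z = 0"
  have "norm z \<le> 0" by (intro norm_le_bound) (simp add: h)
  then show "z = 0" by simp
qed

lemma mixed_eq: "bounded B \<Longrightarrow> subtopology gam B = subtopology tau B"
  using mixed by (simp add: mixed_topology_def)

lemma topspace_tau: "topspace tau = UNIV" by (rule generates_topspace[OF gen_tau])

lemma TR:
  assumes "bounded B" "eventually (\<lambda>a. f a \<in> B) F" "y \<in> B" "limitin tau f y F"
  shows "limitin gam f y F"
proof -
  have "limitin (subtopology tau B) f y F" using assms by (simp add: limitin_subtopology)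
  then have "limitin (subtopology gam B) f y F" using mixed_eq[OF assms(1)] by simp
  then show ?thesis by (simp add: limitin_subtopology)
qed

lemma TR':
  assumes "bounded B" "eventually (\<lambda>a. f a \<in> B) F" "y \<in> B" "limitin gam f y F"
  shows "limitin tau f y F"
proof -
  have "limitin (subtopology gam B) f y F" using assms by (simp add: limitin_subtopology)
  then have "limitin (subtopology tau B) f y F" using mixed_eq[OF assms(1)] by simp
  then show ?thesis by (simp add: limitin_subtopology)
qed

lemma transfer:
  assumes G: "generates G gam" "\<forall>p\<in>G. seminorm p"
    and B: "bounded B" "eventually (\<lambda>a. f a \<in> B) F" "y \<in> B"
    and L: "\<forall>q\<in>Gt. ((\<lambda>a. q (f a - y)) \<longlongrightarrow> 0) F"
    and p: "p \<in> G"
  shows "((\<lambda>a. p (f a - y)) \<longlongrightarrow> 0) F"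
proof -
  have "limitin tau f y F" using L tau_lim by blast
  then have "limitin gam f y F" using TR B by blast
  then show ?thesis using LIM_char[OF G] p by blast
qed

lemma bic_parts1: "\<forall>t\<ge>0. bounded_linear (T t)"
  using bic by (simp add: bi_continuous_semigroup_def)
lemma bic_parts2: "T 0 = id"
  using bic by (simp add: bi_continuous_semigroup_def)
lemma bic_parts3: "\<forall>t\<ge>0. \<forall>s\<ge>0. T (t + s) = T t \<circ> T s"
  using bic by (simp add: bi_continuous_semigroup_def)
lemma bic_parts4: "\<forall>x. continuous_map (top_of_set {0..}) tau (\<lambda>t. T t x)"
  using bic by (simp add: bi_continuous_semigroup_def)
lemma bic_parts5: "\<exists>M \<omega>. M \<ge> 1 \<and> (\<forall>t\<ge>0. onorm (T t) \<le> M * exp (\<omega> * t))"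
  using bic by (simp add: bi_continuous_semigroup_def)
lemma bic_parts6: "\<forall>xs x. bounded (range xs) \<and> limitin tau xs x sequentially \<longrightarrow>
        (\<forall>t0\<ge>0. \<forall>U. openin tau U \<and> 0 \<in> U \<longrightarrow>
           (\<forall>\<^sub>F n in sequentially. \<forall>t\<in>{0..t0}. T t (xs n - x) \<in> U))"
  using bic by (simp add: bi_continuous_semigroup_def)
lemmas bic_parts = bic_parts1 bic_parts2 bic_parts3 bic_parts4 bic_parts5 bic_parts6

lemma lin: "t \<ge> 0 \<Longrightarrow> bounded_linear (T t)"
  using bic_parts(1) by simp

lemma T0: "T 0 = id"
  by (rule bic_parts(2))

lemma T0x [simp]: "T 0 z = z" using T0 by simp

lemma Tadd: "t \<ge> 0 \<Longrightarrow> s \<ge> 0 \<Longrightarrow> T (t + s) z = T t (T s z)"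
  using bic_parts(3) by simp

lemma T_diff: "t \<ge> 0 \<Longrightarrow> T t (a - b) = T t a - T t b"
  using lin linear_diff bounded_linear.linear by blast
lemma T_add: "t \<ge> 0 \<Longrightarrow> T t (a + b) = T t a + T t b"
  using lin linear_add bounded_linear.linear by blast
lemma T_scale: "t \<ge> 0 \<Longrightarrow> T t (c *\<^sub>R a) = c *\<^sub>R T t a"
  using lin linear_scale bounded_linear.linear by blast
lemma T_sum: "t \<ge> 0 \<Longrightarrow> T t (sum f S) = (\<Sum>i\<in>S. T t (f i))"
  using lin linear_sum bounded_linear.linear by blast

lemma Tbound: "\<exists>K\<ge>0. \<forall>t z. 0 \<le> t \<longrightarrow> t \<le> s \<longrightarrow> norm (T t z) \<le> K * norm z"
proof -
  obtain M w where Mw: "M \<ge> 1" "\<forall>t\<ge>0. onorm (T t) \<le> M * exp (w * t)"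
    using bic_parts(5) by blast
  show ?thesis
  proof (intro exI conjI allI impI)
    show "0 \<le> M * exp (\<bar>w\<bar> * \<bar>s\<bar>)" using Mw by simp
    fix t z assume t: "0 \<le> t" "t \<le> s"
    have "norm (T t z) \<le> onorm (T t) * norm z" by (rule onorm[OF lin[OF t(1)]])
    also have "\<dots> \<le> M * exp (w * t) * norm z" using Mw t by (simp add: mult_right_mono)
    also have "\<dots> \<le> M * exp (\<bar>w\<bar> * \<bar>s\<bar>) * norm z"
    proof -
      have "w * t \<le> \<bar>w\<bar> * \<bar>s\<bar>" using t
        by (metis abs_ge_self abs_mult abs_of_nonneg dual_order.trans mult_left_mono abs_ge_zero order.trans)
      then show ?thesis using Mw by (intro mult_right_mono) auto
    qed
    finally show "norm (T t z) \<le> M * exp (\<bar>w\<bar> * \<bar>s\<bar>) * norm z" .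
  qed
qed

lemma orbit_cont:
  assumes q: "q \<in> Gt" and s0: "s0 \<ge> 0" and e: "e > 0"
  shows "\<exists>d>0. \<forall>s\<ge>0. \<bar>s - s0\<bar> < d \<longrightarrow> q (T s z - T s0 z) < e"
proof -
  have c: "continuous_map (top_of_set {0..}) tau (\<lambda>t. T t z)"
    using bic_parts(4) by simp
  have "openin tau {y. q (y - T s0 z) < e}"
    using generatesD[OF gen_tau] sn_ball_open[OF Gt_all q] by simp
  then have "openin (top_of_set {0..}) {t \<in> topspace (top_of_set {0..}). T t z \<in> {y. q (y - T s0 z) < e}}"
    by (rule openin_continuous_map_preimage[OF c])
  then have o: "openin (top_of_set {0..}) {t \<in> {0::real..}. q (T t z - T s0 z) < e}" by simp
  have s0m: "s0 \<in> {t \<in> {0::real..}. q (T t z - T s0 z) < e}" using s0 e sn_zero[OF Gt_sn[OF q]] by simp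
  have "\<forall>x\<in>{t \<in> {0::real..}. q (T t z - T s0 z) < e}. \<exists>r>0. \<forall>x'\<in>{0..}. dist x' x < r \<longrightarrow> x' \<in> {t \<in> {0::real..}. q (T t z - T s0 z) < e}"
    using o unfolding openin_euclidean_subtopology_iff by (rule conjunct2)
  then have "\<exists>d>0. \<forall>x'\<in>{0..}. dist x' s0 < d \<longrightarrow> x' \<in> {t \<in> {0::real..}. q (T t z - T s0 z) < e}"
    using s0m by (rule bspec)
  then obtain d where "d > 0" "\<forall>x'\<in>{0..}. dist x' s0 < d \<longrightarrow> x' \<in> {t \<in> {0::real..}. q (T t z - T s0 z) < e}"
    by blast
  then show ?thesis by (auto simp: dist_real_def)
qed

lemma bicont_seq:
  assumes "bounded (range xs)" "limitin tau xs x sequentially" "t0 \<ge> 0" "q \<in> Gt" "e > 0"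
  shows "eventually (\<lambda>n. \<forall>t\<in>{0..t0}. q (T t (xs n - x)) < e) sequentially"
proof -
  have "openin tau {y. q (y - 0) < e}"
    using generatesD[OF gen_tau] sn_ball_open[OF Gt_all assms(4), of 0 e] by simp
  moreover have "0 \<in> {y. q (y - 0) < e}" using sn_zero[OF Gt_sn[OF assms(4)]] assms(5) by simp
  ultimately have "eventually (\<lambda>n. \<forall>t\<in>{0..t0}. T t (xs n - x) \<in> {y. q (y - 0) < e}) sequentially"
    by (intro bic_parts6[rule_format, OF conjI[OF assms(1) assms(2)] assms(3)] conjI)
  then show ?thesis by simp
qed

lemma complete_seq:
  assumes bd: "bounded (range S)"
    and C: "\<forall>q\<in>Gt. \<forall>e>0. \<exists>N. \<forall>m\<ge>N. \<forall>n\<ge>N. q (S m - S n) < e"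
  shows "\<exists>z. limitin tau S z sequentially"
proof -
  define F where "F = filtermap S sequentially"
  have Fne: "F \<noteq> bot" unfolding F_def by (simp add: filtermap_bot_iff)
  have cauchy: "\<forall>\<^sub>F (x, y) in F \<times>\<^sub>F F. x - y \<in> U" if U: "openin gam U" "0 \<in> U" for U
  proof -
    define B' where "B' = {S m - S n | m n. True}"
    obtain b where b: "\<forall>n. norm (S n) \<le> b" using bd unfolding bounded_iff by auto
    have "norm (S m - S n) \<le> b + b" for m n
      by (meson add_mono b order.trans norm_triangle_ineq4)
    then have bB: "bounded B'" unfolding bounded_iff B'_def by blast
    have "openin (subtopology gam B') (U \<inter> B')" using U by (auto simp: openin_subtopology)
    then have "openin (subtopology tau B') (U \<inter> B')" using mixed_eq[OF bB] by simp
    then obtain V where V: "openin tau V" "U \<inter> B' = V \<inter> B'" by (auto simp: openin_subtopology)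
    have 0: "0 \<in> B'" unfolding B'_def by (auto intro: exI[of _ 0])
    then have V0: "0 \<in> V" using V U by blast
    have SV: "seminorm_open Gt V" using V generatesD[OF gen_tau] by simp
    obtain G e where G: "finite G" "G \<subseteq> Gt" "e > 0" "\<forall>y. (\<forall>p\<in>G. p (y - 0) < e) \<longrightarrow> y \<in> V"
      by (rule seminorm_openE[OF SV V0])
    have "\<forall>p\<in>G. eventually (\<lambda>N. \<forall>m\<ge>N. \<forall>n\<ge>N. p (S m - S n) < e) sequentially"
    proof
      fix p assume "p \<in> G"
      then obtain N where N: "\<forall>m\<ge>N. \<forall>n\<ge>N. p (S m - S n) < e" using C G by blast
      show "eventually (\<lambda>N. \<forall>m\<ge>N. \<forall>n\<ge>N. p (S m - S n) < e) sequentially"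
        unfolding eventually_sequentially by (rule exI[of _ N]) (use N in auto)
    qed
    then have "eventually (\<lambda>N. \<forall>p\<in>G. \<forall>m\<ge>N. \<forall>n\<ge>N. p (S m - S n) < e) sequentially"
      using G(1) by (simp add: eventually_ball_finite)
    then obtain N where N: "\<forall>p\<in>G. \<forall>m\<ge>N. \<forall>n\<ge>N. p (S m - S n) < e"
      unfolding eventually_sequentially by blast
    show ?thesis unfolding eventually_prod_same
    proof (intro exI conjI allI impI)
      show "eventually (\<lambda>x. x \<in> S ` {N..}) F" unfolding F_def eventually_filtermap eventually_sequentially
        by auto
      fix x y assume "x \<in> S ` {N..}" "y \<in> S ` {N..}"
      then obtain m n where mn: "m \<ge> N" "n \<ge> N" "x = S m" "y = S n" by auto
      then have "x - y \<in> V" using G N by auto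
      moreover have "x - y \<in> B'" unfolding B'_def using mn by blast
      ultimately have "x - y \<in> U" using V by blast
      then show "case (x, y) of (x, y) \<Rightarrow> x - y \<in> U" by simp
    qed
  qed
  have "\<forall>F. F \<noteq> bot \<and>
       (\<forall>U. openin gam U \<and> 0 \<in> U \<longrightarrow> (\<forall>\<^sub>F (x, y) in F \<times>\<^sub>F F. x - y \<in> U))
       \<longrightarrow> (\<exists>x. limitin gam id x F)" using compl by (simp add: tvs_complete_def)
  then obtain z where z: "limitin gam id z F" using Fne cauchy by blast
  then have zS: "limitin gam S z sequentially"
    unfolding F_def limitin_def eventually_filtermap by simp
  have "limitin tau S z sequentially"
    by (rule TR'[of "insert z (range S)"]) (use bd zS in auto)
  then show ?thesis by blast
qed

end


context SG begin

lemma gen_D: "D = {x. (\<exists>y. limitin tau (\<lambda>t. (1 / t) *\<^sub>R (T t x - x)) y (at_right 0)) \<and>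
              bdd_above ((\<lambda>t. norm (T t x - x) / t) ` {0<..1})}"
  using gen by (simp add: bi_generator_def)

lemma gen_lim: "x \<in> D \<Longrightarrow> limitin tau (\<lambda>t. (1 / t) *\<^sub>R (T t x - x)) (A x) (at_right 0)"
  using gen by (simp add: bi_generator_def)

lemma gen_bdd: "x \<in> D \<Longrightarrow> bdd_above ((\<lambda>t. norm (T t x - x) / t) ` {0<..1})"
  by (subst (asm) gen_D) simp

lemma easy_dir:
  assumes "equicontinuous_semigroup gam T"
  shows "\<exists>G. directed_seminorms G \<and> generates G gam \<and> dissipative_wrt G D A"
proof -
  obtain G where dG: "directed_seminorms G" and gG: "generates G gam"
    and eq: "\<forall>p\<in>G. \<exists>q\<in>G. \<exists>C\<ge>0. \<forall>t\<ge>0. \<forall>x. p (T t x) \<le> C * q x"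
    using assms unfolding equicontinuous_semigroup_def by auto
  have snG: "\<forall>p\<in>G. seminorm p" using dG ds_sn by blast
  define P where "P p x = (SUP t\<in>{0::real..}. p (T t x))" for p :: "'a \<Rightarrow> real" and x
  have bddP: "bdd_above ((\<lambda>t. p (T t x)) ` {0..})" if "p \<in> G" for p x
  proof -
    have "\<exists>q\<in>G. \<exists>C\<ge>0. \<forall>t\<ge>0. \<forall>x. p (T t x) \<le> C * q x" using eq that by (rule bspec)
    then obtain q C where "q \<in> G" "C \<ge> 0" "\<forall>t\<ge>0. \<forall>x. p (T t x) \<le> C * q x" by auto
    then show ?thesis by (intro bdd_aboveI2[where M="C * q x"]) auto
  qed
  have upP: "p (T t x) \<le> P p x" if "p \<in> G" "t \<ge> 0" for p x t
    unfolding P_def by (rule cSUP_upper[OF _ bddP[OF that(1)]]) (use that in auto)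
  have leastP: "P p x \<le> b" if "\<And>t. t \<ge> 0 \<Longrightarrow> p (T t x) \<le> b" for p x b
    unfolding P_def by (rule cSUP_least) (use that in auto)
  have geP: "p x \<le> P p x" if "p \<in> G" for p x using upP[OF that, of 0] by simp
  have domP: "\<exists>q\<in>G. \<exists>C>0. \<forall>x. P p x \<le> C * q x" if "p \<in> G" for p
  proof -
    have "\<exists>q\<in>G. \<exists>C\<ge>0. \<forall>t\<ge>0. \<forall>x. p (T t x) \<le> C * q x" using eq that by (rule bspec)
    then obtain q C where qC: "q \<in> G" "C \<ge> 0" "\<forall>t\<ge>0. \<forall>x. p (T t x) \<le> C * q x" by auto
    have "P p x \<le> (C + 1) * q x" for x
    proof (rule leastP)
      fix t :: real assume "t \<ge> 0"
      then have "p (T t x) \<le> C * q x" using qC by blast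
      also have "\<dots> \<le> (C + 1) * q x" using sn_nonneg[of q x] snG qC by (simp add: distrib_right)
      finally show "p (T t x) \<le> (C + 1) * q x" .
    qed
    then show ?thesis using qC by (intro bexI[of _ q] exI[of _ "C + 1"]) auto
  qed
  have snP: "seminorm (P p)" if p: "p \<in> G" for p
  proof -
    have sp: "seminorm p" using snG p by blast
    have add: "P p (x + y) \<le> P p x + P p y" for x y
    proof (rule leastP)
      fix t :: real assume t: "t \<ge> 0"
      have "p (T t (x + y)) = p (T t x + T t y)" using T_add[OF t] by simp
      also have "\<dots> \<le> p (T t x) + p (T t y)" by (rule sn_add[OF sp])
      also have "\<dots> \<le> P p x + P p y" using upP[OF p t] by (simp add: add_mono)
      finally show "p (T t (x + y)) \<le> P p x + P p y" .
    qed
    have sc1: "P p (c *\<^sub>R x) \<le> \<bar>c\<bar> * P p x" for c x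
    proof (rule leastP)
      fix t :: real assume t: "t \<ge> 0"
      have "p (T t (c *\<^sub>R x)) = \<bar>c\<bar> * p (T t x)" using T_scale[OF t] sn_scale[OF sp] by simp
      also have "\<dots> \<le> \<bar>c\<bar> * P p x" using upP[OF p t] by (simp add: mult_left_mono)
      finally show "p (T t (c *\<^sub>R x)) \<le> \<bar>c\<bar> * P p x" .
    qed
    have sc: "P p (c *\<^sub>R x) = \<bar>c\<bar> * P p x" for c x
    proof (cases "c = 0")
      case True
      have "P p 0 \<ge> 0" using geP[OF p, of 0] sn_zero[OF sp] by simp
      then show ?thesis using sc1[of c x] True by simp
    next
      case False
      have "P p x = P p (inverse c *\<^sub>R (c *\<^sub>R x))" using False by simp
      also have "\<dots> \<le> \<bar>inverse c\<bar> * P p (c *\<^sub>R x)" by (rule sc1)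
      finally have "\<bar>c\<bar> * P p x \<le> P p (c *\<^sub>R x)" using False
        by (simp add: field_simps abs_inverse)
      then show ?thesis using sc1[of c x] by simp
    qed
    show ?thesis unfolding seminorm_def using add sc by blast
  qed
  have shiftP: "P p (T h x) \<le> P p x" if p: "p \<in> G" and h: "h \<ge> 0" for p h x
  proof (rule leastP)
    fix t :: real assume t: "t \<ge> 0"
    have "p (T t (T h x)) = p (T (t + h) x)" using Tadd[OF t h] by simp
    also have "\<dots> \<le> P p x" using upP[OF p] t h by simp
    finally show "p (T t (T h x)) \<le> P p x" .
  qed
  define G' where "G' = P ` G"
  have dG': "directed_seminorms G'" unfolding directed_seminorms_def
  proof (intro conjI ballI)
    show "G' \<noteq> {}" using dG unfolding G'_def directed_seminorms_def by blast
    show "seminorm p'" if "p' \<in> G'" for p' using that snP unfolding G'_def by blast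
    fix p' q' assume "p' \<in> G'" "q' \<in> G'"
    then obtain p q where pq: "p \<in> G" "q \<in> G" "p' = P p" "q' = P q" unfolding G'_def by blast
    moreover have "\<forall>p\<in>G. \<forall>q\<in>G. \<exists>r\<in>G. \<forall>x. p x \<le> r x \<and> q x \<le> r x"
      using dG by (simp add: directed_seminorms_def)
    ultimately obtain r where r: "r \<in> G" "\<forall>x. p x \<le> r x \<and> q x \<le> r x"
      by meson
    have "P p x \<le> P r x \<and> P q x \<le> P r x" for x
    proof
      show "P p x \<le> P r x"
        by (rule leastP) (use r upP[OF r(1)] in \<open>meson order.trans\<close>)
      show "P q x \<le> P r x"
        by (rule leastP) (use r upP[OF r(1)] in \<open>meson order.trans\<close>)
    qed
    then show "\<exists>r'\<in>G'. \<forall>x. p' x \<le> r' x \<and> q' x \<le> r' x"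
      using pq r unfolding G'_def by blast
  qed
  have gG': "generates G' gam"
  proof (rule dom_generates[OF gG])
    show "\<forall>p\<in>G'. \<exists>q\<in>G. \<exists>C>0. \<forall>x. p x \<le> C * q x" using domP unfolding G'_def by blast
    show "\<forall>p\<in>G. \<exists>q\<in>G'. \<exists>C>0. \<forall>x. p x \<le> C * q x"
      unfolding G'_def using geP by (metis imageI mult_1 zero_less_one)
  qed
  have diss: "dissipative_wrt G' D A" unfolding dissipative_wrt_def
  proof (intro allI impI ballI)
    fix l :: real and x p' assume l: "l > 0" and x: "x \<in> D" and "p' \<in> G'"
    then obtain p where p: "p \<in> G" "p' = P p" unfolding G'_def by blast
    have sp: "seminorm p" using snG p by blast
    have sP: "seminorm (P p)" using snP p by blast
    obtain q C where qC: "q \<in> G" "C > 0" "\<forall>x. P p x \<le> C * q x" using domP[OF p(1)] by blast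
    have sq: "seminorm q" using snG qC by blast
    define f where "f h = (1 / h) *\<^sub>R (T h x - x)" for h
    have Lt: "limitin tau f (A x) (at_right 0)" using gen_lim[OF x] unfolding f_def .
    obtain b where b: "\<forall>h\<in>{0<..1}. norm (T h x - x) / h \<le> b"
      using gen_bdd[OF x] unfolding bdd_above_def by auto
    have ev01: "eventually (\<lambda>h. h \<in> {0<..<1}) (at_right (0::real))"
      by (rule eventually_at_right_real) simp
    have evB: "eventually (\<lambda>h. f h \<in> insert (A x) (cball 0 b)) (at_right 0)"
      using ev01
    proof eventually_elim
      case (elim h)
      then have "norm (f h) = norm (T h x - x) / h" unfolding f_def by simp
      also have "\<dots> \<le> b" using b elim by auto
      finally show ?case by simp
    qed
    have Lg: "limitin gam f (A x) (at_right 0)"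
      by (rule TR[OF _ evB _ Lt]) auto
    then have qlim: "((\<lambda>h. q (f h - A x)) \<longlongrightarrow> 0) (at_right 0)"
      using LIM_char[OF gG snG] qC by blast
    have key: "l * P p x \<le> P p (l *\<^sub>R x - A x) + C * q (f h - A x)" if h: "h \<in> {0<..<1}" for h
    proof -
      have hp: "h > 0" using h by simp
      have e1: "l *\<^sub>R x - f h = (1 / h) *\<^sub>R ((1 + l * h) *\<^sub>R x - T h x)"
        unfolding f_def using hp by (simp add: algebra_simps scaleR_diff_right)
      have "l * P p x = (1 / h) * ((1 + l * h) * P p x - P p x)" using hp by (simp add: field_simps)
      also have "\<dots> \<le> (1 / h) * ((1 + l * h) * P p x - P p (T h x))"
        using shiftP[OF p(1), of h x] hp by (intro mult_left_mono) auto
      also have "\<dots> = (1 / h) * (P p ((1 + l * h) *\<^sub>R x) - P p (T h x))"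
        using sn_scale[OF sP] l hp by simp
      also have "\<dots> \<le> (1 / h) * P p ((1 + l * h) *\<^sub>R x - T h x)"
        using sn_rev[OF sP, of "(1 + l * h) *\<^sub>R x" "T h x"] hp by (intro mult_left_mono) auto
      also have "\<dots> = P p (l *\<^sub>R x - f h)" unfolding e1 using sn_scale[OF sP] hp by simp
      also have "\<dots> \<le> P p (l *\<^sub>R x - A x) + P p (A x - f h)"
        using sn_tri[OF sP, of "l *\<^sub>R x" "f h" "A x"] by simp
      also have "\<dots> \<le> P p (l *\<^sub>R x - A x) + C * q (f h - A x)"
        using qC sn_commute[OF sP, of "A x" "f h"] by simp
      finally show ?thesis .
    qed
    have "((\<lambda>h. P p (l *\<^sub>R x - A x) + C * q (f h - A x)) \<longlongrightarrow> P p (l *\<^sub>R x - A x) + C * 0) (at_right 0)"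
      by (intro tendsto_intros qlim)
    then have lim2: "((\<lambda>h. P p (l *\<^sub>R x - A x) + C * q (f h - A x)) \<longlongrightarrow> P p (l *\<^sub>R x - A x)) (at_right 0)"
      by simp
    have "l * P p x \<le> P p (l *\<^sub>R x - A x)"
      by (rule tendsto_lowerbound[OF lim2]) (use ev01 key in \<open>auto elim: eventually_mono\<close>)
    then show "l * p' x \<le> p' (l *\<^sub>R x - A x)" using p by simp
  qed
  show ?thesis using dG' gG' diss by blast
qed

end


lemma limitin_comp:
  assumes L: "limitin X g l G" and S: "filterlim S G F"
  shows "limitin X (\<lambda>n. g (S n)) l F"
  unfolding limitin_def
proof (intro conjI allI impI)
  show "l \<in> topspace X" using L by (simp add: limitin_def)
  fix U assume U: "openin X U \<and> l \<in> U"
  have ev: "eventually (\<lambda>x. g x \<in> U) G" using limitinD[OF L] U by blast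
  have "eventually (\<lambda>x. g x \<in> U) (filtermap S F)"
    by (rule filter_leD[OF S[unfolded filterlim_def] ev])
  then show "eventually (\<lambda>n. g (S n) \<in> U) F" by (simp add: eventually_filtermap)
qed

lemma limitin_cong_ev:
  assumes L: "limitin X f l F" and e: "eventually (\<lambda>x. f x = g x) F"
  shows "limitin X g l F"
  unfolding limitin_def
proof (intro conjI allI impI)
  show "l \<in> topspace X" using L by (simp add: limitin_def)
  fix U assume U: "openin X U \<and> l \<in> U"
  have ev: "eventually (\<lambda>x. f x \<in> U) F" using limitinD[OF L] U by blast
  show "eventually (\<lambda>x. g x \<in> U) F" using ev e by eventually_elim simp
qed

lemma dini:
  fixes \<phi> :: "real \<Rightarrow> real"
  assumes t: "t \<ge> 0" and c: "continuous_on {0..t} \<phi>"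
    and d: "\<And>s e. s \<in> {0<..t} \<Longrightarrow> e > 0 \<Longrightarrow> eventually (\<lambda>h. \<phi> s - \<phi> (s - h) \<le> e * h) (at_right 0)"
  shows "\<phi> t \<le> \<phi> 0"
proof -
  have main: "\<phi> t \<le> \<phi> 0 + 2 * e * t" if e: "e > 0" for e
  proof -
    define \<psi> where "\<psi> s = \<phi> s - 2 * e * s" for s
    define E where "E = {0..t} \<inter> \<psi> -` {\<psi> t..}"
    have c\<psi>: "continuous_on {0..t} \<psi>" unfolding \<psi>_def by (intro continuous_intros c)
    have clE: "closed E" unfolding E_def by (rule continuous_closed_preimage[OF c\<psi>]) auto
    have tE: "t \<in> E" unfolding E_def using t by simp
    have bE: "bdd_below E" unfolding E_def by (rule bdd_belowI[of _ 0]) auto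
    define m where "m = Inf E"
    have mE: "m \<in> E" unfolding m_def using closed_contains_Inf[OF _ bE clE] tE by blast
    have m0: "m = 0"
    proof (rule ccontr)
      assume "m \<noteq> 0"
      then have mpos: "m > 0" using mE unfolding E_def by simp
      have mt: "m \<in> {0<..t}" using mE mpos unfolding E_def by simp
      have ev: "eventually (\<lambda>h. \<phi> m - \<phi> (m - h) \<le> e * h \<and> h \<in> {0<..<m}) (at_right 0)"
        using d[OF mt e] eventually_at_right_real[OF mpos] by (rule eventually_conj)
      obtain h where h: "\<phi> m - \<phi> (m - h) \<le> e * h" "h \<in> {0<..<m}"
        using eventually_happens[OF ev] by auto
      have "\<psi> (m - h) = \<phi> (m - h) - 2 * e * (m - h)" unfolding \<psi>_def ..
      also have "\<dots> \<ge> \<psi> m + e * h" unfolding \<psi>_def using h by (simp add: algebra_simps)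
      finally have "\<psi> (m - h) > \<psi> m" using e h by (smt (verit) mult_pos_pos greaterThanLessThan_iff)
      moreover have "\<psi> m \<ge> \<psi> t" using mE unfolding E_def by simp
      ultimately have "m - h \<in> E" unfolding E_def using h mE unfolding E_def by auto
      then have "m \<le> m - h" unfolding m_def by (rule cInf_lower[OF _ bE])
      then show False using h by simp
    qed
    have "\<psi> 0 \<ge> \<psi> t" using mE m0 unfolding E_def by simp
    then show ?thesis unfolding \<psi>_def by simp
  qed
  show ?thesis
  proof (rule field_le_epsilon)
    fix e :: real assume e: "e > 0"
    have "\<phi> t \<le> \<phi> 0 + 2 * (e / (2 * t + 1)) * t" using main[of "e / (2 * t + 1)"] e t by simp
    also have "2 * (e / (2 * t + 1)) * t \<le> e" using e t by (simp add: field_simps)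
    finally show "\<phi> t \<le> \<phi> 0 + e" by simp
  qed
qed

locale SG2 = SG +
  fixes Gg :: "('a::banach \<Rightarrow> real) set"
  assumes dGg: "directed_seminorms Gg" and gGg: "generates Gg gam" and dis: "dissipative_wrt Gg D A"
begin

lemma Gg_all: "\<forall>p\<in>Gg. seminorm p" using dGg ds_sn by blast

lemma Gg_sn: "p \<in> Gg \<Longrightarrow> seminorm p" using Gg_all by blast

lemma dis_le: "l > 0 \<Longrightarrow> x \<in> D \<Longrightarrow> p \<in> Gg \<Longrightarrow> l * p x \<le> p (l *\<^sub>R x - A x)"
  using dis[unfolded dissipative_wrt_def, rule_format] by blast

lemma dis_h: assumes h: "h > 0" and x: "x \<in> D" and p: "p \<in> Gg"
  shows "p x \<le> p (x - h *\<^sub>R A x)"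
proof -
  have "(1 / h) * p x \<le> p ((1 / h) *\<^sub>R x - A x)" using dis_le[OF _ x p, of "1 / h"] h by simp
  then have "p x \<le> h * p ((1 / h) *\<^sub>R x - A x)" using h by (simp add: field_simps)
  also have "\<dots> = p (h *\<^sub>R ((1 / h) *\<^sub>R x - A x))" using sn_scale[OF Gg_sn[OF p]] h by simp
  also have "h *\<^sub>R ((1 / h) *\<^sub>R x - A x) = x - h *\<^sub>R A x" using h by (simp add: algebra_simps)
  finally show ?thesis .
qed

lemma tau_unique:
  assumes a: "limitin tau f a F" and b: "limitin tau f b F" and F: "F \<noteq> bot"
  shows "a = b"
proof (rule sep[of "a - b", simplified])
  fix q assume q: "q \<in> Gt"
  have sq: "seminorm q" using Gt_sn[OF q] .
  have la: "((\<lambda>x. q (f x - a)) \<longlongrightarrow> 0) F" using a tau_lim q by blast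
  have lb: "((\<lambda>x. q (f x - b)) \<longlongrightarrow> 0) F" using b tau_lim q by blast
  have l: "((\<lambda>x. q (f x - a) + q (f x - b)) \<longlongrightarrow> 0) F" using tendsto_add[OF la lb] by simp
  have "\<forall>x. q (a - b) \<le> q (f x - a) + q (f x - b)"
    using sn_tri[OF sq, of a b] sn_commute[OF sq] sq
    by (metis add.commute sn_tri)
  then have "q (a - b) \<le> 0"
    by (intro tendsto_lowerbound[OF l]) (auto simp: F)
  then show "q (a - b) = 0" using sn_nonneg[OF sq, of "a - b"] by simp
qed

lemma seq_at_right:
  assumes L: "limitin X g l (at_right 0)" and S: "\<And>n. 0 < S n" "S \<longlonglongrightarrow> (0::real)"
  shows "limitin X (\<lambda>n. g (S n)) l sequentially"
proof (rule limitin_comp[OF L])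
  show "filterlim S (at_right 0) sequentially"
    using S by (intro tendsto_imp_filterlim_at_right) auto
qed

lemma quot_T:
  assumes s: "s \<ge> 0" and h: "h > 0"
  shows "(1 / h) *\<^sub>R (T h (T s z) - T s z) = T s ((1 / h) *\<^sub>R (T h z - z))"
proof -
  have "T h (T s z) = T s (T h z)" using Tadd[of h s z] Tadd[of s h z] s h by (simp add: add.commute)
  then show ?thesis using T_scale[OF s] T_diff[OF s] by simp
qed

lemma D_orbit:
  assumes z: "z \<in> D" and s: "s \<ge> 0"
  shows "T s z \<in> D \<and> A (T s z) = T s (A z)"
proof -
  define g where "g h = (1 / h) *\<^sub>R (T h z - z)" for h
  have Lg: "limitin tau g (A z) (at_right 0)" using gen_lim[OF z] unfolding g_def .
  obtain b where b: "\<forall>h\<in>{0<..1}. norm (T h z - z) / h \<le> b"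
    using gen_bdd[OF z] unfolding bdd_above_def by auto
  have gb: "norm (g h) \<le> b" if "h \<in> {0<..1}" for h
    using b that unfolding g_def by simp
  obtain K where K: "K \<ge> 0" "\<forall>t w. 0 \<le> t \<longrightarrow> t \<le> s \<longrightarrow> norm (T t w) \<le> K * norm w"
    using Tbound[of s] by blast
  have Ls: "limitin tau (\<lambda>h. T s (g h)) (T s (A z)) (at_right 0)"
    unfolding tau_lim
  proof (intro ballI)
    fix q assume q: "q \<in> Gt"
    show "((\<lambda>h. q (T s (g h) - T s (A z))) \<longlongrightarrow> 0) (at_right 0)"
    proof (rule tendsto_at_right_sequentially[of 0 1])
      fix S :: "nat \<Rightarrow> real" assume S: "\<And>n. 0 < S n" "\<And>n. S n < 1" "S \<longlonglongrightarrow> 0"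
      define xs where "xs n = g (S n)" for n
      have bxs: "bounded (range xs)" unfolding bounded_iff xs_def
        using gb S(1,2) by (intro exI[of _ b]) (auto intro: less_imp_le)
      have lxs: "limitin tau xs (A z) sequentially" unfolding xs_def
        by (rule seq_at_right[OF Lg S(1) S(3)])
      show "(\<lambda>n. q (T s (g (S n)) - T s (A z))) \<longlonglongrightarrow> 0"
      proof (rule tendstoI)
        fix e :: real assume e: "e > 0"
        have "eventually (\<lambda>n. \<forall>t\<in>{0..s}. q (T t (xs n - A z)) < e) sequentially"
          by (rule bicont_seq[OF bxs lxs s q e])
        then show "eventually (\<lambda>n. dist (q (T s (g (S n)) - T s (A z))) 0 < e) sequentially"
        proof eventually_elim
          case (elim n)
          then have "q (T s (xs n - A z)) < e" using s by auto
          then show ?case using T_diff[OF s] sn_nonneg[OF Gt_sn[OF q]] unfolding xs_def by simp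
        qed
      qed
    qed simp
  qed
  have ev: "eventually (\<lambda>h. T s (g h) = (1 / h) *\<^sub>R (T h (T s z) - T s z)) (at_right 0)"
    using eventually_at_right_less[of 0]
    by eventually_elim (use quot_T[OF s] in \<open>simp add: g_def\<close>)
  have L2: "limitin tau (\<lambda>h. (1 / h) *\<^sub>R (T h (T s z) - T s z)) (T s (A z)) (at_right 0)"
    by (rule limitin_cong_ev[OF Ls ev])
  have bd2: "bdd_above ((\<lambda>h. norm (T h (T s z) - T s z) / h) ` {0<..1})"
  proof (rule bdd_aboveI2[where M="K * b"])
    fix h :: real assume h: "h \<in> {0<..1}"
    have "norm (T h (T s z) - T s z) / h = norm ((1 / h) *\<^sub>R (T h (T s z) - T s z))" using h by simp
    also have "\<dots> = norm (T s (g h))" using quot_T[OF s, of h z] h unfolding g_def by simp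
    also have "\<dots> \<le> K * norm (g h)" using K s by simp
    also have "\<dots> \<le> K * b" using gb[OF h] K by (simp add: mult_left_mono)
    finally show "norm (T h (T s z) - T s z) / h \<le> K * b" .
  qed
  have inD: "T s z \<in> D" by (subst gen_D) (use L2 bd2 in blast)
  have "A (T s z) = T s (A z)"
    by (rule tau_unique[OF gen_lim[OF inD] L2]) simp
  then show ?thesis using inD by simp
qed

end


context SG2 begin

lemma back_err:
  assumes z: "z \<in> D" and s: "s > 0" and p: "p \<in> Gg"
  shows "((\<lambda>h. p ((1 / h) *\<^sub>R (T s z - T (s - h) z) - T s (A z))) \<longlongrightarrow> 0) (at_right 0)"
proof -
  define g where "g h = (1 / h) *\<^sub>R (T h z - z)" for h
  define E where "E h = (1 / h) *\<^sub>R (T s z - T (s - h) z) - T s (A z)" for h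
  have Lg: "limitin tau g (A z) (at_right 0)" using gen_lim[OF z] unfolding g_def .
  obtain b where b: "\<forall>h\<in>{0<..1}. norm (T h z - z) / h \<le> b"
    using gen_bdd[OF z] unfolding bdd_above_def by auto
  have gb: "norm (g h) \<le> b" if "h \<in> {0<..1}" for h
    using b that unfolding g_def by simp
  obtain K where K: "K \<ge> 0" "\<forall>t w. 0 \<le> t \<longrightarrow> t \<le> s \<longrightarrow> norm (T t w) \<le> K * norm w"
    using Tbound[of s] by blast
  define m where "m = min 1 s"
  have m: "m > 0" "m \<le> 1" "m \<le> s" using s unfolding m_def by auto
  have idE: "E h = T (s - h) (g h - A z) + (T (s - h) (A z) - T s (A z))" if h: "h \<in> {0<..<m}" for h
  proof -
    have hs: "s - h \<ge> 0" "h > 0" using h m by auto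
    have "T (s - h) (T h z) = T s z" using Tadd[of "s - h" h z] hs by simp
    then have "T (s - h) (g h) = (1 / h) *\<^sub>R (T s z - T (s - h) z)"
      unfolding g_def using T_scale[OF hs(1)] T_diff[OF hs(1)] by simp
    then show ?thesis unfolding E_def using T_diff[OF hs(1)] by (simp add: algebra_simps)
  qed
  define R where "R = K * (b + norm (A z)) + (K * norm (A z) + K * norm (A z))"
  have evB: "eventually (\<lambda>h. E h \<in> cball 0 R) (at_right 0)"
    using eventually_at_right_real[OF m(1)]
  proof eventually_elim
    case (elim h)
    have hs: "s - h \<ge> 0" "s - h \<le> s" "h \<in> {0<..1}" using elim m by auto
    have "norm (E h) \<le> norm (T (s - h) (g h - A z)) + norm (T (s - h) (A z) - T s (A z))"
      unfolding idE[OF elim] by (rule norm_triangle_ineq)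
    also have "\<dots> \<le> K * (b + norm (A z)) + (K * norm (A z) + K * norm (A z))"
    proof (rule add_mono)
      have "norm (T (s - h) (g h - A z)) \<le> K * norm (g h - A z)" using K hs by blast
      also have "\<dots> \<le> K * (b + norm (A z))"
        using K(1) gb[OF hs(3)] norm_triangle_ineq4[of "g h" "A z"] by (intro mult_left_mono) auto
      finally show "norm (T (s - h) (g h - A z)) \<le> K * (b + norm (A z))" .
      have "norm (T (s - h) (A z) - T s (A z)) \<le> norm (T (s - h) (A z)) + norm (T s (A z))"
        by (rule norm_triangle_ineq4)
      also have "\<dots> \<le> K * norm (A z) + K * norm (A z)"
        using K hs s by (intro add_mono) auto
      finally show "norm (T (s - h) (A z) - T s (A z)) \<le> K * norm (A z) + K * norm (A z)" .
    qed
    finally show ?case unfolding R_def by simp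
  qed
  have R0: "0 \<in> cball 0 R"
  proof -
    have "0 \<le> b" using gb[of 1] by (meson norm_ge_zero order_trans greaterThanAtMost_iff zero_less_one order_refl)
    then have "0 \<le> K * (b + norm (A z))"
      using K(1) by (intro mult_nonneg_nonneg) auto
    then show ?thesis unfolding R_def using K(1) by simp
  qed
  have qlim: "\<forall>q\<in>Gt. ((\<lambda>h. q (E h - 0)) \<longlongrightarrow> 0) (at_right 0)"
  proof (intro ballI)
    fix q assume q: "q \<in> Gt"
    have sq: "seminorm q" using Gt_sn[OF q] .
    have t1: "((\<lambda>h. q (T (s - h) (g h - A z))) \<longlongrightarrow> 0) (at_right 0)"
    proof (rule tendsto_at_right_sequentially[of 0 m])
      fix S :: "nat \<Rightarrow> real" assume S: "\<And>n. 0 < S n" "\<And>n. S n < m" "S \<longlonglongrightarrow> 0"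
      define xs where "xs n = g (S n)" for n
      have Sin: "S n \<in> {0<..1}" for n using S(1)[of n] S(2)[of n] m(2) by auto
      have bxs: "bounded (range xs)" unfolding bounded_iff xs_def
        using gb[OF Sin] by (intro exI[of _ b]) auto
      have lxs: "limitin tau xs (A z) sequentially" unfolding xs_def
        by (rule seq_at_right[OF Lg S(1) S(3)])
      show "(\<lambda>n. q (T (s - S n) (g (S n) - A z))) \<longlonglongrightarrow> 0"
      proof (rule tendstoI)
        fix e :: real assume e: "e > 0"
        have "eventually (\<lambda>n. \<forall>t\<in>{0..s}. q (T t (xs n - A z)) < e) sequentially"
          by (rule bicont_seq[OF bxs lxs _ q e]) (use s in simp)
        then show "eventually (\<lambda>n. dist (q (T (s - S n) (g (S n) - A z))) 0 < e) sequentially"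
        proof eventually_elim
          case (elim n)
          have "s - S n \<in> {0..s}" using S(1,2)[of n] m by auto
          then have "q (T (s - S n) (xs n - A z)) < e" using elim by blast
          then show ?case using sn_nonneg[OF sq] unfolding xs_def by simp
        qed
      qed
    qed (use m in simp)
    have t2: "((\<lambda>h. q (T (s - h) (A z) - T s (A z))) \<longlongrightarrow> 0) (at_right 0)"
    proof (rule tendstoI)
      fix e :: real assume e: "e > 0"
      obtain d where d: "d > 0" "\<forall>r\<ge>0. \<bar>r - s\<bar> < d \<longrightarrow> q (T r (A z) - T s (A z)) < e"
        using orbit_cont[OF q _ e, of s "A z"] s by auto
      have md: "min d s > 0" using d s by simp
      show "eventually (\<lambda>h. dist (q (T (s - h) (A z) - T s (A z))) 0 < e) (at_right 0)"
        using eventually_at_right_real[OF md]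
      proof eventually_elim
        case (elim h)
        then have "q (T (s - h) (A z) - T s (A z)) < e" using d(2)[rule_format, of "s - h"] by auto
        then show ?case using sn_nonneg[OF sq] by simp
      qed
    qed
    have t12: "((\<lambda>h. q (T (s - h) (g h - A z)) + q (T (s - h) (A z) - T s (A z))) \<longlongrightarrow> 0) (at_right 0)"
      using tendsto_add[OF t1 t2] by simp
    show "((\<lambda>h. q (E h - 0)) \<longlongrightarrow> 0) (at_right 0)"
    proof (rule tendsto_sandwich[OF _ _ tendsto_const t12])
      show "eventually (\<lambda>h. 0 \<le> q (E h - 0)) (at_right 0)" using sn_nonneg[OF sq] by simp
      show "eventually (\<lambda>h. q (E h - 0) \<le> q (T (s - h) (g h - A z)) + q (T (s - h) (A z) - T s (A z))) (at_right 0)"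
        using eventually_at_right_real[OF m(1)]
        by eventually_elim (use idE sn_add[OF sq] in simp)
    qed
  qed
  have "((\<lambda>h. p (E h - 0)) \<longlongrightarrow> 0) (at_right 0)"
    by (rule transfer[OF gGg Gg_all _ evB R0 qlim p]) simp
  then show ?thesis unfolding E_def by simp
qed

lemma orbit_p_cont:
  assumes p: "p \<in> Gg" and t: "t \<ge> 0"
  shows "continuous_on {0..t} (\<lambda>r. p (T r z))"
  unfolding continuous_on_def
proof (intro ballI)
  fix r0 assume r0: "r0 \<in> {0..t}"
  have sp: "seminorm p" using Gg_sn[OF p] .
  obtain K where K: "K \<ge> 0" "\<forall>t' w. 0 \<le> t' \<longrightarrow> t' \<le> t \<longrightarrow> norm (T t' w) \<le> K * norm w"
    using Tbound[of t] by blast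
  have evin: "eventually (\<lambda>r. r \<in> {0..t}) (at r0 within {0..t})"
    unfolding eventually_at by (intro exI[of _ 1]) auto
  have evB: "eventually (\<lambda>r. T r z \<in> cball 0 (K * norm z)) (at r0 within {0..t})"
    using evin by eventually_elim (use K in auto)
  have B0: "T r0 z \<in> cball 0 (K * norm z)" using K r0 by auto
  have qlim: "\<forall>q\<in>Gt. ((\<lambda>r. q (T r z - T r0 z)) \<longlongrightarrow> 0) (at r0 within {0..t})"
  proof (intro ballI)
    fix q assume q: "q \<in> Gt"
    show "((\<lambda>r. q (T r z - T r0 z)) \<longlongrightarrow> 0) (at r0 within {0..t})"
    proof (rule tendstoI)
      fix e :: real assume e: "e > 0"
      obtain d where d: "d > 0" "\<forall>r\<ge>0. \<bar>r - r0\<bar> < d \<longrightarrow> q (T r z - T r0 z) < e"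
        using orbit_cont[OF q _ e, of r0 z] r0 by auto
      show "eventually (\<lambda>r. dist (q (T r z - T r0 z)) 0 < e) (at r0 within {0..t})"
        unfolding eventually_at
        by (intro exI[of _ d]) (use d sn_nonneg[OF Gt_sn[OF q]] in \<open>auto simp: dist_real_def\<close>)
    qed
  qed
  have pl: "((\<lambda>r. p (T r z - T r0 z)) \<longlongrightarrow> 0) (at r0 within {0..t})"
    by (rule transfer[OF gGg Gg_all _ evB B0 qlim p]) simp
  show "((\<lambda>r. p (T r z)) \<longlongrightarrow> p (T r0 z)) (at r0 within {0..t})"
  proof (rule tendstoI)
    fix e :: real assume e: "e > 0"
    have "eventually (\<lambda>r. p (T r z - T r0 z) < e) (at r0 within {0..t})"
      using order_tendstoD(2)[OF pl e] .
    then show "eventually (\<lambda>r. dist (p (T r z)) (p (T r0 z)) < e) (at r0 within {0..t})"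
    proof eventually_elim
      case (elim r)
      then show ?case using sn_rev[OF sp, of "T r z" "T r0 z"] by (simp add: dist_real_def)
    qed
  qed
qed

lemma D_contr:
  assumes z: "z \<in> D" and p: "p \<in> Gg" and t: "t \<ge> 0"
  shows "p (T t z) \<le> p z"
proof -
  have sp: "seminorm p" using Gg_sn[OF p] .
  have "p (T t z) \<le> p (T 0 z)"
  proof (rule dini[OF t orbit_p_cont[OF p t]])
    fix s e :: real assume s: "s \<in> {0<..t}" and e: "e > 0"
    have s0: "s > 0" using s by simp
    define y where "y = T s z"
    have yD: "y \<in> D" and Ay: "A y = T s (A z)" using D_orbit[OF z, of s] s0 unfolding y_def by auto
    have ev1: "eventually (\<lambda>h. p ((1 / h) *\<^sub>R (T s z - T (s - h) z) - T s (A z)) < e) (at_right 0)"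
      using order_tendstoD(2)[OF back_err[OF z s0 p] e] .
    show "eventually (\<lambda>h. p (T s z) - p (T (s - h) z) \<le> e * h) (at_right 0)"
      using ev1 eventually_at_right_real[OF s0]
    proof eventually_elim
      case (elim h)
      have h: "h > 0" using elim by simp
      define E where "E = (1 / h) *\<^sub>R (T s z - T (s - h) z) - T s (A z)"
      have Ay': "A (T s z) = T s (A z)" using Ay unfolding y_def .
      have "y - h *\<^sub>R A y = T (s - h) z + h *\<^sub>R E"
        unfolding E_def y_def Ay' using h by (simp add: algebra_simps)
      have "p y \<le> p (y - h *\<^sub>R A y)" by (rule dis_h[OF h yD p])
      also have "\<dots> = p (T (s - h) z + h *\<^sub>R E)" using \<open>y - h *\<^sub>R A y = _\<close> by simp
      also have "\<dots> \<le> p (T (s - h) z) + h * p E" using sn_add[OF sp, of "T (s - h) z" "h *\<^sub>R E"] sn_scale[OF sp, of h E] h by simp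
      also have "\<dots> \<le> p (T (s - h) z) + h * e" using elim h unfolding E_def by simp
      finally show ?case unfolding y_def by (simp add: mult.commute)
    qed
  qed
  then show ?thesis by simp
qed

end


lemma sum_shift_ivl: "(\<Sum>i\<in>{a..<a + k}. g i) = (\<Sum>j<k. g (a + j))" for a k :: nat
proof -
  have "(\<Sum>i\<in>{0 + a..<k + a}. g i) = (\<Sum>j\<in>{0..<k}. g (j + a))" by (rule sum.shift_bounds_nat_ivl)
  then show ?thesis by (simp add: atLeast0LessThan add.commute)
qed

lemma sum_double: "(\<Sum>i<n * k. g i) = (\<Sum>m<n. \<Sum>j<k. g (m * k + j))" for n k :: nat
  using sum.nat_group[of "\<lambda>i. g i" k n] by (simp add: sum_shift_ivl)

lemma pts_lemma: "h \<ge> 0 \<Longrightarrow> k \<le> N \<Longrightarrow> N > 0 \<Longrightarrow> real k * h / real N \<in> {0..h}"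
proof -
  assume a: "h \<ge> 0" "k \<le> N" "N > 0"
  have "real k * h \<le> h * real N" unfolding mult.commute[of _ h] by (rule mult_left_mono) (use a in simp_all)
  then show ?thesis using a by (auto simp: pos_divide_le_eq)
qed

lemma tele: "(\<Sum>k<N. f (k + j) - f k) = (\<Sum>i<j. f (N + i) - f i)" for f :: "nat \<Rightarrow> 'b::ab_group_add"
proof (induction j)
  case 0 then show ?case by simp
next
  case (Suc j)
  have "(\<Sum>k<N. f (k + Suc j) - f k) = (\<Sum>k<N. f (k + j) - f k) + (\<Sum>k<N. f (Suc k + j) - f (k + j))"
    by (simp add: sum.distrib[symmetric] algebra_simps)
  also have "(\<Sum>k<N. f (Suc k + j) - f (k + j)) = f (N + j) - f j"
    using sum_lessThan_telescope[of "\<lambda>k. f (k + j)" N] by simp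
  finally show ?case using Suc by (simp add: add.commute)
qed

context SG begin

definition Rp :: "'a \<Rightarrow> real \<Rightarrow> nat \<Rightarrow> 'a" where
  "Rp x h N = (h / real N) *\<^sub>R (\<Sum>k<N. T (real k * h / real N) x)"

definition Ii :: "'a \<Rightarrow> real \<Rightarrow> 'a" where
  "Ii x h = (SOME z. limitin tau (\<lambda>n. Rp x h (Suc n)) z sequentially)"

lemma q_lim_cont:
  assumes q: "q \<in> Gt" and L: "limitin tau f l F"
  shows "((\<lambda>a. q (f a - w)) \<longlongrightarrow> q (l - w)) F"
proof (rule tendstoI)
  fix e :: real assume e: "e > 0"
  have "((\<lambda>a. q (f a - l)) \<longlongrightarrow> 0) F" using L tau_lim q by blast
  then have "eventually (\<lambda>a. q (f a - l) < e) F" using e by (rule order_tendstoD)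
  then show "eventually (\<lambda>a. dist (q (f a - w)) (q (l - w)) < e) F"
  proof eventually_elim
    case (elim a)
    have "\<bar>q (f a - w) - q (l - w)\<bar> \<le> q ((f a - w) - (l - w))" by (rule sn_rev[OF Gt_sn[OF q]])
    then show ?case using elim by (simp add: dist_real_def)
  qed
qed

lemma Rp_norm:
  assumes h: "h \<ge> 0" and N: "N > 0" and K: "\<forall>t w. 0 \<le> t \<longrightarrow> t \<le> h \<longrightarrow> norm (T t w) \<le> K * norm w"
  shows "norm (Rp x h N) \<le> h * K * norm x"
proof -
  have pts: "real k * h / real N \<in> {0..h}" if "k < N" for k
    using that h N by (intro pts_lemma) auto
  have "norm (\<Sum>k<N. T (real k * h / real N) x) \<le> (\<Sum>k<N. norm (T (real k * h / real N) x))"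
    by (rule norm_sum)
  also have "\<dots> \<le> (\<Sum>k<N. K * norm x)" using pts K by (intro sum_mono) auto
  finally have s: "norm (\<Sum>k<N. T (real k * h / real N) x) \<le> real N * (K * norm x)" by simp
  have "norm (Rp x h N) = h / real N * norm (\<Sum>k<N. T (real k * h / real N) x)"
    unfolding Rp_def using h by simp
  also have "\<dots> \<le> h / real N * (real N * (K * norm x))" using s h by (intro mult_left_mono) auto
  also have "\<dots> = h * K * norm x" using N by simp
  finally show ?thesis .
qed

lemma unif:
  assumes q: "q \<in> Gt" and c: "c \<ge> 0" and e: "e > 0"
  shows "\<exists>d>0. \<forall>s\<in>{0..c}. \<forall>s'\<in>{0..c}. \<bar>s - s'\<bar> < d \<longrightarrow> q (T s x - T s' x) < e"
proof (rule ccontr)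
  assume "\<not> ?thesis"
  then have "\<forall>n. \<exists>s s'. s \<in> {0..c} \<and> s' \<in> {0..c} \<and> \<bar>s - s'\<bar> < inverse (real (Suc n)) \<and> q (T s x - T s' x) \<ge> e"
    by (metis not_le inverse_positive_iff_positive of_nat_0_less_iff zero_less_Suc)
  then obtain a b where ab: "\<And>n. a n \<in> {0..c}" "\<And>n. b n \<in> {0..c}"
    "\<And>n. \<bar>a n - b n\<bar> < inverse (real (Suc n))" "\<And>n. q (T (a n) x - T (b n) x) \<ge> e"
    by metis
  obtain l r where lr: "l \<in> {0..c}" "strict_mono (r :: nat \<Rightarrow> nat)" "(a \<circ> r) \<longlonglongrightarrow> l"
    using seq_compactE[OF compact_imp_seq_compact[OF compact_Icc]] ab(1) by metis
  have la: "(\<lambda>n. a (r n)) \<longlonglongrightarrow> l" using lr(3) by (simp add: o_def)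
  have dl: "(\<lambda>n. b (r n) - a (r n)) \<longlonglongrightarrow> 0"
  proof (rule Lim_null_comparison[OF _ LIMSEQ_inverse_real_of_nat])
    show "eventually (\<lambda>n. norm (b (r n) - a (r n)) \<le> inverse (real (Suc n))) sequentially"
    proof (intro always_eventually allI)
      fix n
      have "\<bar>a (r n) - b (r n)\<bar> < inverse (real (Suc (r n)))" by (rule ab(3))
      also have "\<dots> \<le> inverse (real (Suc n))"
        using seq_suble[OF lr(2), of n] by (simp add: field_simps)
      finally show "norm (b (r n) - a (r n)) \<le> inverse (real (Suc n))" by simp
    qed
  qed
  have lb: "(\<lambda>n. b (r n)) \<longlonglongrightarrow> l" using tendsto_add[OF la dl] by simp
  have e2: "e / 2 > 0" using e by simp
  obtain d where d: "d > 0" "\<forall>s\<ge>0. \<bar>s - l\<bar> < d \<longrightarrow> q (T s x - T l x) < e / 2"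
    using orbit_cont[OF q _ e2, of l x] lr(1) by auto
  have ev1: "eventually (\<lambda>n. dist (a (r n)) l < d) sequentially" using la d(1) by (rule tendstoD)
  have ev2: "eventually (\<lambda>n. dist (b (r n)) l < d) sequentially" using lb d(1) by (rule tendstoD)
  obtain n where n: "dist (a (r n)) l < d" "dist (b (r n)) l < d"
    using eventually_happens[OF eventually_conj[OF ev1 ev2]] by auto
  have sq: "seminorm q" using Gt_sn[OF q] .
  have "q (T (a (r n)) x - T (b (r n)) x) \<le> q (T (a (r n)) x - T l x) + q (T l x - T (b (r n)) x)"
    by (rule sn_tri[OF sq])
  also have "\<dots> < e / 2 + e / 2"
    using d(2)[rule_format, of "a (r n)"] d(2)[rule_format, of "b (r n)"] n ab(1,2)[of "r n"]
      sn_commute[OF sq, of "T l x" "T (b (r n)) x"]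
    by (auto simp: dist_real_def)
  finally show False using ab(4)[of "r n"] by simp
qed

lemma refine:
  assumes h: "h > 0" and q: "q \<in> Gt" and N1: "N1 > 0" and N2: "N2 > 0"
    and d: "\<forall>s\<in>{0..h}. \<forall>s'\<in>{0..h}. \<bar>s - s'\<bar> < dd \<longrightarrow> q (T s x - T s' x) < e"
    and hd: "h / real N1 < dd"
  shows "q (Rp x h N1 - Rp x h (N1 * N2)) \<le> h * e"
proof -
  have sq: "seminorm q" using Gt_sn[OF q] .
  define c where "c = h / (real N1 * real N2)"
  have c: "c > 0" unfolding c_def using h N1 N2 by simp
  define f where "f k j = T (real k * h / real N1) x - T (real (k * N2 + j) * h / real (N1 * N2)) x" for k j
  have cs: "(\<Sum>k<N1. \<Sum>j<N2. T (real k * h / real N1) x) = real N2 *\<^sub>R (\<Sum>k<N1. T (real k * h / real N1) x)"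
    by (simp add: sum_constant_scaleR scaleR_sum_right)
  have cc: "c * real N2 = h / real N1" unfolding c_def using N2 by simp
  have R1: "Rp x h N1 = c *\<^sub>R (\<Sum>k<N1. \<Sum>j<N2. T (real k * h / real N1) x)"
    unfolding cs Rp_def scaleR_scaleR cc ..
  have R2: "Rp x h (N1 * N2) = c *\<^sub>R (\<Sum>k<N1. \<Sum>j<N2. T (real (k * N2 + j) * h / real (N1 * N2)) x)"
    unfolding Rp_def c_def using sum_double[of "\<lambda>i. T (real i * h / real (N1 * N2)) x" N1 N2] by simp
  have diff: "Rp x h N1 - Rp x h (N1 * N2) = c *\<^sub>R (\<Sum>k<N1. \<Sum>j<N2. f k j)"
    unfolding R1 R2 f_def by (simp add: sum_subtractf scaleR_diff_right)
  have bnd: "q (f k j) \<le> e" if kj: "k < N1" "j < N2" for k j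
  proof -
    have kN: "real k + 1 \<le> real N1" using kj by simp
    have p1: "real k * h / real N1 \<in> {0..h}" using kj h N1 by (intro pts_lemma) auto
    have "k * N2 + j < N1 * N2"
    proof -
      have "k * N2 + j < k * N2 + N2" using kj by simp
      also have "\<dots> = (k + 1) * N2" by simp
      also have "\<dots> \<le> N1 * N2" using kj by (intro mult_right_mono) auto
      finally show ?thesis .
    qed
    then have p2: "real (k * N2 + j) * h / real (N1 * N2) \<in> {0..h}" using h N1 N2
      by (intro pts_lemma) auto
    have eqd: "real (k * N2 + j) * h / real (N1 * N2) - real k * h / real N1 = real j * h / (real N1 * real N2)"
      using N1 N2 by (simp add: field_simps)
    have "real j * h / (real N1 * real N2) < h / real N1"
      using kj h N1 N2 by (simp add: field_simps)
    moreover have "\<bar>real k * h / real N1 - real (k * N2 + j) * h / real (N1 * N2)\<bar> = real j * h / (real N1 * real N2)"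
      using h by (subst abs_minus_commute, subst eqd) simp
    ultimately have "\<bar>real k * h / real N1 - real (k * N2 + j) * h / real (N1 * N2)\<bar> < dd"
      using hd by linarith
    then show ?thesis unfolding f_def using d p1 p2 by (meson less_imp_le)
  qed
  have "q (Rp x h N1 - Rp x h (N1 * N2)) = c * q (\<Sum>k<N1. \<Sum>j<N2. f k j)"
    unfolding diff using sn_scale[OF sq] c by simp
  also have "\<dots> \<le> c * (\<Sum>k<N1. \<Sum>j<N2. q (f k j))"
  proof (rule mult_left_mono)
    have "q (\<Sum>k<N1. \<Sum>j<N2. f k j) \<le> (\<Sum>k<N1. q (\<Sum>j<N2. f k j))" by (rule sn_sum[OF sq])
    also have "\<dots> \<le> (\<Sum>k<N1. \<Sum>j<N2. q (f k j))" by (intro sum_mono sn_sum[OF sq])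
    finally show "q (\<Sum>k<N1. \<Sum>j<N2. f k j) \<le> (\<Sum>k<N1. \<Sum>j<N2. q (f k j))" .
  qed (use c in simp)
  also have "\<dots> \<le> c * (\<Sum>k<N1. \<Sum>j<N2. e)" using c bnd by (intro mult_left_mono sum_mono) auto
  also have "\<dots> = h * e" unfolding c_def using N1 N2 by simp
  finally show ?thesis .
qed

lemma Rp_cauchy:
  assumes h: "h > 0" and q: "q \<in> Gt" and e: "e > 0"
  shows "\<exists>M. \<forall>m\<ge>M. \<forall>n\<ge>M. q (Rp x h (Suc m) - Rp x h (Suc n)) < e"
proof -
  have sq: "seminorm q" using Gt_sn[OF q] .
  define e' where "e' = e / (2 * h + 1)"
  have e': "e' > 0" unfolding e'_def using e h by simp
  have he: "2 * (h * e') < e" unfolding e'_def using e h by (simp add: field_simps)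
  obtain dd where dd: "dd > 0" "\<forall>s\<in>{0..h}. \<forall>s'\<in>{0..h}. \<bar>s - s'\<bar> < dd \<longrightarrow> q (T s x - T s' x) < e'"
    using unif[OF q _ e', of h x] h by auto
  obtain M :: nat where M: "h / dd < real M" using reals_Archimedean2 by blast
  have hd: "h / real (Suc m) < dd" if "m \<ge> M" for m
  proof -
    have "h / dd < real (Suc m)" using M that by linarith
    then show ?thesis using dd(1) h by (simp add: field_simps)
  qed
  show ?thesis
  proof (intro exI allI impI)
    fix m n assume mn: "M \<le> m" "M \<le> n"
    have a: "q (Rp x h (Suc m) - Rp x h (Suc m * Suc n)) \<le> h * e'"
      by (rule refine[OF h q _ _ dd(2) hd[OF mn(1)]]) auto
    have b: "q (Rp x h (Suc n) - Rp x h (Suc n * Suc m)) \<le> h * e'"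
      by (rule refine[OF h q _ _ dd(2) hd[OF mn(2)]]) auto
    have "q (Rp x h (Suc m) - Rp x h (Suc n)) \<le>
        q (Rp x h (Suc m) - Rp x h (Suc m * Suc n)) + q (Rp x h (Suc m * Suc n) - Rp x h (Suc n))"
      by (rule sn_tri[OF sq])
    also have "\<dots> \<le> h * e' + h * e'"
      using a b sn_commute[OF sq, of "Rp x h (Suc m * Suc n)" "Rp x h (Suc n)"]
      by (simp add: mult.commute)
    finally show "q (Rp x h (Suc m) - Rp x h (Suc n)) < e" using he by linarith
  qed
qed

lemma Ii_lim:
  assumes h: "h > 0"
  shows "limitin tau (\<lambda>n. Rp x h (Suc n)) (Ii x h) sequentially"
proof -
  obtain K where K: "K \<ge> 0" "\<forall>t w. 0 \<le> t \<longrightarrow> t \<le> h \<longrightarrow> norm (T t w) \<le> K * norm w"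
    using Tbound[of h] by blast
  have bd: "bounded (range (\<lambda>n. Rp x h (Suc n)))" unfolding bounded_iff
    using Rp_norm[OF _ _ K(2)] h by (intro exI[of _ "h * K * norm x"]) auto
  have "\<exists>z. limitin tau (\<lambda>n. Rp x h (Suc n)) z sequentially"
    by (rule complete_seq[OF bd]) (use Rp_cauchy[OF h] in blast)
  then show ?thesis unfolding Ii_def by (rule someI_ex)
qed

lemma Ii_mean:
  assumes h: "h > 0" and q: "q \<in> Gt" and b: "\<forall>s\<in>{0..h}. q (T s x - w) \<le> \<beta>"
  shows "q (Ii x h - h *\<^sub>R w) \<le> h * \<beta>"
proof -
  have sq: "seminorm q" using Gt_sn[OF q] .
  have each: "q (Rp x h N - h *\<^sub>R w) \<le> h * \<beta>" if N: "N > 0" for N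
  proof -
    have pts: "real k * h / real N \<in> {0..h}" if "k < N" for k
      using that h N by (intro pts_lemma) auto
    have "Rp x h N - h *\<^sub>R w = (h / real N) *\<^sub>R (\<Sum>k<N. T (real k * h / real N) x - w)"
      unfolding Rp_def using N by (simp add: sum_subtractf scaleR_diff_right sum_constant_scaleR)
    then have "q (Rp x h N - h *\<^sub>R w) = h / real N * q (\<Sum>k<N. T (real k * h / real N) x - w)"
      using sn_scale[OF sq] h by simp
    also have "\<dots> \<le> h / real N * (\<Sum>k<N. q (T (real k * h / real N) x - w))"
      using sn_sum[OF sq] h by (intro mult_left_mono) auto
    also have "\<dots> \<le> h / real N * (\<Sum>k<N. \<beta>)"
      using pts b h by (intro mult_left_mono sum_mono) auto
    also have "\<dots> = h * \<beta>" using N by simp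
    finally show ?thesis .
  qed
  have "((\<lambda>n. q (Rp x h (Suc n) - h *\<^sub>R w)) \<longlongrightarrow> q (Ii x h - h *\<^sub>R w)) sequentially"
    by (rule q_lim_cont[OF q Ii_lim[OF h]])
  then show ?thesis
    by (rule tendsto_upperbound) (use each in auto)
qed

lemma Ii_norm:
  assumes h: "h > 0" and K: "\<forall>t w. 0 \<le> t \<longrightarrow> t \<le> h \<longrightarrow> norm (T t w) \<le> K * norm w"
  shows "norm (Ii x h) \<le> h * (K * norm x)"
proof (rule norm_le_bound)
  fix q assume q: "q \<in> Gt"
  have "q (Ii x h - h *\<^sub>R 0) \<le> h * (K * norm x)"
  proof (rule Ii_mean[OF h q])
    show "\<forall>s\<in>{0..h}. q (T s x - 0) \<le> K * norm x"
    proof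
      fix s assume "s \<in> {0..h}"
      then have "norm (T s x) \<le> K * norm x" using K by auto
      then show "q (T s x - 0) \<le> K * norm x" using q_le_norm[OF q, of "T s x"] by simp
    qed
  qed
  then show "q (Ii x h) \<le> h * (K * norm x)" by simp
qed

end


context SG begin

definition jj :: "real \<Rightarrow> real \<Rightarrow> nat \<Rightarrow> nat" where
  "jj h r N = nat \<lfloor>r / (h / real N)\<rfloor>"

definition W1 :: "'a \<Rightarrow> real \<Rightarrow> real \<Rightarrow> nat \<Rightarrow> 'a" where
  "W1 x h r N = (h / real N) *\<^sub>R
     (\<Sum>k<N. T (r + real k * h / real N) x - T (real (k + jj h r N) * h / real N) x)"

definition W2 :: "'a \<Rightarrow> real \<Rightarrow> real \<Rightarrow> nat \<Rightarrow> 'a" where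
  "W2 x h r N = (h / real N) *\<^sub>R
     (\<Sum>i<jj h r N. T (h + real i * h / real N) x - T (real i * h / real N) x)"

lemma jj_bounds:
  assumes h: "h > 0" and r: "r \<ge> 0" and N: "N > 0"
  shows "real (jj h r N) * (h / real N) \<le> r" "r < real (jj h r N) * (h / real N) + h / real N"
proof -
  define d where "d = h / real N"
  have d: "d > 0" unfolding d_def using h N by simp
  have v: "r / d \<ge> 0" using r d by simp
  have j: "real (jj h r N) = of_int \<lfloor>r / d\<rfloor>" unfolding jj_def d_def[symmetric] using v by simp
  have "of_int \<lfloor>r / d\<rfloor> * d \<le> r / d * d" by (rule mult_right_mono[OF of_int_floor_le]) (use d in simp)
  then have "real (jj h r N) * d \<le> r" using j d by simp
  then show "real (jj h r N) * (h / real N) \<le> r" unfolding d_def .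
  have "r / d * d < (of_int \<lfloor>r / d\<rfloor> + 1) * d" by (rule mult_strict_right_mono[OF real_of_int_floor_add_one_gt d])
  then have "r < (real (jj h r N) + 1) * d" using j d by simp
  then show "r < real (jj h r N) * (h / real N) + h / real N" unfolding d_def by (simp add: algebra_simps)
qed

lemma ident:
  assumes h: "h > 0" and r: "r \<ge> 0" and N: "N > 0"
  shows "T r (Rp x h N) - Rp x h N = W1 x h r N + W2 x h r N"
proof -
  define f where "f k = T (real k * h / real N) x" for k
  define j where "j = jj h r N"
  have Tr: "T r (Rp x h N) = (h / real N) *\<^sub>R (\<Sum>k<N. T (r + real k * h / real N) x)"
  proof -
    have "T r (Rp x h N) = (h / real N) *\<^sub>R T r (\<Sum>k<N. T (real k * h / real N) x)"
      unfolding Rp_def by (rule T_scale[OF r])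
    also have "\<dots> = (h / real N) *\<^sub>R (\<Sum>k<N. T r (T (real k * h / real N) x))"
      by (simp only: T_sum[OF r])
    also have "\<dots> = (h / real N) *\<^sub>R (\<Sum>k<N. T (r + real k * h / real N) x)"
      using Tadd[OF r] h by simp
    finally show ?thesis .
  qed
  have fN: "f (N + i) = T (h + real i * h / real N) x" for i
  proof -
    have "real (N + i) * h / real N = h + real i * h / real N" using N by (simp add: field_simps)
    then show ?thesis unfolding f_def by simp
  qed
  have "(\<Sum>k<N. T (r + real k * h / real N) x) - (\<Sum>k<N. f k) =
        (\<Sum>k<N. T (r + real k * h / real N) x - f (k + j)) + (\<Sum>k<N. f (k + j) - f k)"
    by (simp add: sum_subtractf)
  also have "(\<Sum>k<N. f (k + j) - f k) = (\<Sum>i<j. f (N + i) - f i)" by (rule tele)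
  finally have e: "(\<Sum>k<N. T (r + real k * h / real N) x) - (\<Sum>k<N. f k) =
        (\<Sum>k<N. T (r + real k * h / real N) x - f (k + j)) + (\<Sum>i<j. T (h + real i * h / real N) x - f i)"
    unfolding fN .
  show ?thesis
    unfolding Tr W1_def W2_def j_def[symmetric]
    using e unfolding Rp_def f_def
    by (simp add: scaleR_diff_right[symmetric] scaleR_add_right[symmetric])
qed

lemma W1_bound:
  assumes h: "h > 0" and r: "r > 0" and N: "N > 0" and q: "q \<in> Gt"
    and u: "\<forall>s\<in>{0..h + r}. \<forall>s'\<in>{0..h + r}. \<bar>s - s'\<bar> < d \<longrightarrow> q (T s x - T s' x) < \<eta>"
    and hd: "h / real N < d"
  shows "q (W1 x h r N) \<le> h * \<eta>"
proof -
  have sq: "seminorm q" using Gt_sn[OF q] .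
  define j where "j = jj h r N"
  have jb: "real j * (h / real N) \<le> r" "r < real j * (h / real N) + h / real N"
    using jj_bounds[OF h _ N, of r] r unfolding j_def by auto
  have trm: "q (T (r + real k * h / real N) x - T (real (k + j) * h / real N) x) \<le> \<eta>" if k: "k < N" for k
  proof -
    have kh: "real k * h / real N \<in> {0..h}" using k h N by (intro pts_lemma) auto
    have eq2: "real (k + j) * h / real N = real k * h / real N + real j * (h / real N)"
      by (simp add: distrib_right add_divide_distrib)
    have jn: "real j * (h / real N) \<ge> 0" using h N by simp
    have p1: "r + real k * h / real N \<in> {0..h + r}" using kh r by auto
    have p2: "real (k + j) * h / real N \<in> {0..h + r}" unfolding eq2 using kh jb jn by auto
    have "\<bar>(r + real k * h / real N) - real (k + j) * h / real N\<bar> < d"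
      unfolding eq2 using jb hd by (simp add: abs_if)
    then show ?thesis using u p1 p2 by (meson less_imp_le)
  qed
  have "q (W1 x h r N) = h / real N * q (\<Sum>k<N. T (r + real k * h / real N) x - T (real (k + j) * h / real N) x)"
    unfolding W1_def j_def[symmetric] using sn_scale[OF sq] h by simp
  also have "\<dots> \<le> h / real N * (\<Sum>k<N. q (T (r + real k * h / real N) x - T (real (k + j) * h / real N) x))"
    using sn_sum[OF sq] h by (intro mult_left_mono) auto
  also have "\<dots> \<le> h / real N * (\<Sum>k<N. \<eta>)" using trm h by (intro mult_left_mono sum_mono) auto
  also have "\<dots> = h * \<eta>" using N by simp
  finally show ?thesis .
qed

lemma W2_bound0:
  assumes h: "h > 0" and r: "r > 0" and N: "N > 0" and q: "q \<in> Gt"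
    and K: "K \<ge> 0" "\<forall>t w. 0 \<le> t \<longrightarrow> t \<le> h + r \<longrightarrow> norm (T t w) \<le> K * norm w"
  shows "q (W2 x h r N) \<le> r * (2 * K * norm x)"
proof -
  have sq: "seminorm q" using Gt_sn[OF q] .
  define j where "j = jj h r N"
  have jb: "real j * (h / real N) \<le> r"
    using jj_bounds[OF h _ N, of r] r unfolding j_def by auto
  have trm: "q (T (h + real i * h / real N) x - T (real i * h / real N) x) \<le> 2 * K * norm x"
    if i: "i < j" for i
  proof -
    have "real i * (h / real N) \<le> real j * (h / real N)" using i h N by (intro mult_right_mono) auto
    then have ib: "real i * h / real N \<le> r" using jb by simp
    have i0: "real i * h / real N \<ge> 0" using h by simp
    have "q (T (h + real i * h / real N) x - T (real i * h / real N) x) \<le>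
        q (T (h + real i * h / real N) x) + q (T (real i * h / real N) x)" by (rule sn_diff[OF sq])
    also have "\<dots> \<le> norm (T (h + real i * h / real N) x) + norm (T (real i * h / real N) x)"
      using q_le_norm[OF q] by (intro add_mono) auto
    also have "\<dots> \<le> K * norm x + K * norm x"
      using K(2) ib i0 h r by (intro add_mono) auto
    finally show ?thesis by simp
  qed
  have "q (W2 x h r N) = h / real N * q (\<Sum>i<j. T (h + real i * h / real N) x - T (real i * h / real N) x)"
    unfolding W2_def j_def[symmetric] using sn_scale[OF sq] h by simp
  also have "\<dots> \<le> h / real N * (\<Sum>i<j. q (T (h + real i * h / real N) x - T (real i * h / real N) x))"
    using sn_sum[OF sq] h by (intro mult_left_mono) auto
  also have "\<dots> \<le> h / real N * (\<Sum>i<j. 2 * K * norm x)" using trm h by (intro mult_left_mono sum_mono) auto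
  also have "\<dots> = (real j * (h / real N)) * (2 * K * norm x)" by simp
  also have "\<dots> \<le> r * (2 * K * norm x)" using jb K by (intro mult_right_mono) auto
  finally show ?thesis .
qed

lemma W2_bound1:
  assumes h: "h > 0" and r: "r > 0" and N: "N > 0" and q: "q \<in> Gt"
    and a: "a \<ge> 0" "\<forall>s\<in>{0..r}. q (T (h + s) x - T h x) \<le> a"
    and b: "b \<ge> 0" "\<forall>s\<in>{0..r}. q (T s x - x) \<le> b"
  shows "q ((1 / r) *\<^sub>R W2 x h r N - (T h x - x)) \<le> (a + b) + (h / real N) / r * q (T h x - x)"
proof -
  have sq: "seminorm q" using Gt_sn[OF q] .
  define j where "j = jj h r N"
  define dl where "dl = h / real N"
  have dl: "dl > 0" unfolding dl_def using h N by simp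
  have jb: "real j * dl \<le> r" "r < real j * dl + dl"
    using jj_bounds[OF h _ N, of r] r unfolding j_def dl_def by auto
  define v where "v = T h x - x"
  define g where "g i = (T (h + real i * dl) x - T h x) - (T (real i * dl) x - x)" for i
  have W2e: "W2 x h r N = dl *\<^sub>R (\<Sum>i<j. T (h + real i * dl) x - T (real i * dl) x)"
    unfolding W2_def j_def[symmetric] dl_def by (simp add: field_simps)
  have ge: "g i + v = T (h + real i * dl) x - T (real i * dl) x" for i
    unfolding g_def v_def by (simp add: algebra_simps)
  have "(\<Sum>i<j. g i) + real j *\<^sub>R v = (\<Sum>i<j. g i + v)"
    by (simp add: sum.distrib sum_constant_scaleR)
  then have sum_eq: "(\<Sum>i<j. T (h + real i * dl) x - T (real i * dl) x) = (\<Sum>i<j. g i) + real j *\<^sub>R v"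
    unfolding ge by simp
  have decomp: "(1 / r) *\<^sub>R W2 x h r N - v = (dl / r) *\<^sub>R (\<Sum>i<j. g i) + (real j * dl / r - 1) *\<^sub>R v"
    unfolding W2e sum_eq using r by (simp add: algebra_simps)
  have gb: "q (g i) \<le> a + b" if i: "i < j" for i
  proof -
    have ij: "real i * dl \<le> real j * dl" using i dl by (intro mult_right_mono) auto
    have s1: "real i * dl \<le> r" using ij jb(1) by linarith
    have s0: "0 \<le> real i * dl" using dl by simp
    have s: "real i * dl \<in> {0..r}" using s0 s1 by simp
    have "q (g i) \<le> q (T (h + real i * dl) x - T h x) + q (T (real i * dl) x - x)"
      unfolding g_def by (rule sn_diff[OF sq])
    also have "\<dots> \<le> a + b" using a b s by (intro add_mono) auto
    finally show ?thesis .
  qed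
  have "q ((dl / r) *\<^sub>R (\<Sum>i<j. g i)) = dl / r * q (\<Sum>i<j. g i)"
    using sn_scale[OF sq] dl r by simp
  also have "\<dots> \<le> dl / r * (\<Sum>i<j. q (g i))"
    using sn_sum[OF sq, of g "{..<j}"] dl r by (intro mult_left_mono) auto
  also have "\<dots> \<le> dl / r * (\<Sum>i<j. a + b)" using gb dl r by (intro mult_left_mono sum_mono) auto
  also have "\<dots> = (real j * dl / r) * (a + b)" by simp
  also have "\<dots> \<le> a + b"
  proof -
    have "real j * dl / r \<le> 1" using jb r by simp
    then have "(real j * dl / r) * (a + b) \<le> 1 * (a + b)" using a b by (intro mult_right_mono) auto
    then show ?thesis by simp
  qed
  finally have t1: "q ((dl / r) *\<^sub>R (\<Sum>i<j. g i)) \<le> a + b" .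
  have "q ((real j * dl / r - 1) *\<^sub>R v) = \<bar>real j * dl / r - 1\<bar> * q v" by (rule sn_scale[OF sq])
  also have "\<bar>real j * dl / r - 1\<bar> \<le> dl / r"
  proof -
    have "real j * dl / r \<le> 1" using jb r by simp
    moreover have "1 - real j * dl / r < dl / r"
    proof -
      have "r - real j * dl < dl" using jb by linarith
      then have "(r - real j * dl) / r < dl / r" by (rule divide_strict_right_mono) (use r in simp)
      moreover have "(r - real j * dl) / r = 1 - real j * dl / r" using r by (simp add: diff_divide_distrib)
      ultimately show ?thesis by simp
    qed
    ultimately show ?thesis by linarith
  qed
  then have "\<bar>real j * dl / r - 1\<bar> * q v \<le> dl / r * q v" by (rule mult_right_mono) (rule sn_nonneg[OF sq])
  finally have t2: "q ((real j * dl / r - 1) *\<^sub>R v) \<le> dl / r * q v" .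
  have "q ((1 / r) *\<^sub>R W2 x h r N - v) \<le> q ((dl / r) *\<^sub>R (\<Sum>i<j. g i)) + q ((real j * dl / r - 1) *\<^sub>R v)"
    unfolding decomp by (rule sn_add[OF sq])
  also have "\<dots> \<le> (a + b) + dl / r * q v" using t1 t2 by simp
  finally show ?thesis unfolding v_def dl_def .
qed

end


context SG begin

lemma Rp_bounded:
  assumes h: "h > 0"
  shows "bounded (range (\<lambda>n. Rp x h (Suc n)))"
proof -
  obtain K where K: "K \<ge> 0" "\<forall>t w. 0 \<le> t \<longrightarrow> t \<le> h \<longrightarrow> norm (T t w) \<le> K * norm w"
    using Tbound[of h] by blast
  show ?thesis unfolding bounded_iff
    using Rp_norm[OF _ _ K(2)] h by (intro exI[of _ "h * K * norm x"]) auto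
qed

lemma LQ:
  assumes h: "h > 0" and r: "r > 0" and q: "q \<in> Gt"
  shows "((\<lambda>n. q ((1 / r) *\<^sub>R (T r (Rp x h (Suc n)) - Rp x h (Suc n)) - v))
           \<longlongrightarrow> q ((1 / r) *\<^sub>R (T r (Ii x h) - Ii x h) - v)) sequentially"
proof (rule q_lim_cont[OF q])
  define S where "S n = Rp x h (Suc n)" for n
  define I where "I = Ii x h"
  have LS: "limitin tau S I sequentially" unfolding S_def I_def by (rule Ii_lim[OF h])
  have bS: "bounded (range S)" unfolding S_def by (rule Rp_bounded[OF h])
  have r0: "r \<ge> 0" using r by simp
  show "limitin tau (\<lambda>n. (1 / r) *\<^sub>R (T r (Rp x h (Suc n)) - Rp x h (Suc n))) ((1 / r) *\<^sub>R (T r (Ii x h) - Ii x h)) sequentially"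
    unfolding S_def[symmetric] I_def[symmetric] tau_lim
  proof (intro ballI)
    fix q' assume q': "q' \<in> Gt"
    have sq: "seminorm q'" using Gt_sn[OF q'] .
    have l1: "((\<lambda>n. q' (S n - I)) \<longlongrightarrow> 0) sequentially" using LS tau_lim q' by blast
    have l2: "((\<lambda>n. q' (T r (S n - I))) \<longlongrightarrow> 0) sequentially"
    proof (rule tendstoI)
      fix e :: real assume e: "e > 0"
      have "eventually (\<lambda>n. \<forall>t\<in>{0..r}. q' (T t (S n - I)) < e) sequentially"
        by (rule bicont_seq[OF bS LS r0 q' e])
      then show "eventually (\<lambda>n. dist (q' (T r (S n - I))) 0 < e) sequentially"
        by eventually_elim (use r sn_nonneg[OF sq] in auto)
    qed
    have l12: "((\<lambda>n. (1 / r) * (q' (T r (S n - I)) + q' (S n - I))) \<longlongrightarrow> (1 / r) * (0 + 0)) sequentially"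
      by (intro tendsto_intros l1 l2)
    show "((\<lambda>n. q' ((1 / r) *\<^sub>R (T r (S n) - S n) - (1 / r) *\<^sub>R (T r I - I))) \<longlongrightarrow> 0) sequentially"
    proof (rule tendsto_sandwich[OF _ _ tendsto_const])
      show "eventually (\<lambda>n. 0 \<le> q' ((1 / r) *\<^sub>R (T r (S n) - S n) - (1 / r) *\<^sub>R (T r I - I))) sequentially"
        using sn_nonneg[OF sq] by simp
      show "eventually (\<lambda>n. q' ((1 / r) *\<^sub>R (T r (S n) - S n) - (1 / r) *\<^sub>R (T r I - I))
              \<le> (1 / r) * (q' (T r (S n - I)) + q' (S n - I))) sequentially"
      proof (intro always_eventually allI)
        fix n
        have dT: "T r (S n - I) = T r (S n) - T r I" by (rule T_diff[OF r0])
        have "(1 / r) *\<^sub>R (T r (S n) - S n) - (1 / r) *\<^sub>R (T r I - I) = (1 / r) *\<^sub>R (T r (S n - I) - (S n - I))"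
          unfolding dT by (simp add: algebra_simps)
        then have "q' ((1 / r) *\<^sub>R (T r (S n) - S n) - (1 / r) *\<^sub>R (T r I - I)) = (1 / r) * q' (T r (S n - I) - (S n - I))"
          using sn_scale[OF sq] r by simp
        also have "\<dots> \<le> (1 / r) * (q' (T r (S n - I)) + q' (S n - I))"
          using sn_diff[OF sq] r by (intro mult_left_mono) auto
        finally show "q' ((1 / r) *\<^sub>R (T r (S n) - S n) - (1 / r) *\<^sub>R (T r I - I)) \<le> (1 / r) * (q' (T r (S n - I)) + q' (S n - I))" .
      qed
      show "((\<lambda>n. (1 / r) * (q' (T r (S n - I)) + q' (S n - I))) \<longlongrightarrow> 0) sequentially" using l12 by simp
    qed
  qed
qed

lemma bound_lim:
  assumes h: "h > 0" and r: "r > 0" and q: "q \<in> Gt"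
    and ev: "\<And>e'. e' > 0 \<Longrightarrow> eventually (\<lambda>n. q ((1 / r) *\<^sub>R (T r (Rp x h (Suc n)) - Rp x h (Suc n)) - v) \<le> B + e') sequentially"
  shows "q ((1 / r) *\<^sub>R (T r (Ii x h) - Ii x h) - v) \<le> B"
proof (rule field_le_epsilon)
  fix e' :: real assume e': "e' > 0"
  show "q ((1 / r) *\<^sub>R (T r (Ii x h) - Ii x h) - v) \<le> B + e'"
    by (rule tendsto_upperbound[OF LQ[OF h r q] ev[OF e']]) simp
qed

lemma W1_small:
  assumes h: "h > 0" and r: "r > 0" and q: "q \<in> Gt" and e: "e > 0"
  shows "eventually (\<lambda>n. (1 / r) * q (W1 x h r (Suc n)) \<le> e) sequentially"
proof -
  define \<eta> where "\<eta> = e * r / h"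
  have \<eta>: "\<eta> > 0" unfolding \<eta>_def using e r h by simp
  obtain d where d: "d > 0" "\<forall>s\<in>{0..h + r}. \<forall>s'\<in>{0..h + r}. \<bar>s - s'\<bar> < d \<longrightarrow> q (T s x - T s' x) < \<eta>"
    using unif[OF q _ \<eta>, of "h + r" x] h r by auto
  obtain M :: nat where M: "h / d < real M" using reals_Archimedean2 by blast
  show ?thesis unfolding eventually_sequentially
  proof (intro exI allI impI)
    fix n assume n: "M \<le> n"
    have "h / d < real (Suc n)" using M n by linarith
    then have hd: "h / real (Suc n) < d" using d(1) h by (simp add: field_simps)
    have "q (W1 x h r (Suc n)) \<le> h * \<eta>" by (rule W1_bound[OF h r _ q d(2) hd]) simp
    then have "(1 / r) * q (W1 x h r (Suc n)) \<le> (1 / r) * (h * \<eta>)" using r by (intro mult_left_mono) auto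
    also have "(1 / r) * (h * \<eta>) = e" unfolding \<eta>_def using r h by simp
    finally show "(1 / r) * q (W1 x h r (Suc n)) \<le> e" .
  qed
qed

lemma decomp_q:
  assumes h: "h > 0" and r: "r > 0" and q: "q \<in> Gt"
  shows "q ((1 / r) *\<^sub>R (T r (Rp x h (Suc n)) - Rp x h (Suc n)) - v)
          \<le> (1 / r) * q (W1 x h r (Suc n)) + q ((1 / r) *\<^sub>R W2 x h r (Suc n) - v)"
proof -
  have sq: "seminorm q" using Gt_sn[OF q] .
  have eq: "(1 / r) *\<^sub>R (T r (Rp x h (Suc n)) - Rp x h (Suc n)) - v
        = (1 / r) *\<^sub>R W1 x h r (Suc n) + ((1 / r) *\<^sub>R W2 x h r (Suc n) - v)"
    using ident[OF h _ zero_less_Suc, of r x n] r by (simp add: algebra_simps)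
  have "q ((1 / r) *\<^sub>R (T r (Rp x h (Suc n)) - Rp x h (Suc n)) - v)
      \<le> q ((1 / r) *\<^sub>R W1 x h r (Suc n)) + q ((1 / r) *\<^sub>R W2 x h r (Suc n) - v)"
    unfolding eq by (rule sn_add[OF sq])
  also have "q ((1 / r) *\<^sub>R W1 x h r (Suc n)) = (1 / r) * q (W1 x h r (Suc n))"
    using sn_scale[OF sq] r by simp
  finally show ?thesis .
qed

lemma Ii_D:
  assumes h: "h > 0"
  shows "Ii x h \<in> D"
proof -
  define I where "I = Ii x h"
  obtain K where K: "K \<ge> 0" "\<forall>t w. 0 \<le> t \<longrightarrow> t \<le> h + 1 \<longrightarrow> norm (T t w) \<le> K * norm w"
    using Tbound[of "h + 1"] by blast
  have bdd: "bdd_above ((\<lambda>r. norm (T r I - I) / r) ` {0<..1})"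
  proof (rule bdd_aboveI2[where M="2 * K * norm x"])
    fix r :: real assume r1: "r \<in> {0<..1}"
    have r: "r > 0" using r1 by simp
    have Kr: "\<forall>t w. 0 \<le> t \<longrightarrow> t \<le> h + r \<longrightarrow> norm (T t w) \<le> K * norm w" using K r1 by auto
    have "norm ((1 / r) *\<^sub>R (T r I - I)) \<le> 2 * K * norm x"
    proof (rule norm_le_bound)
      fix q assume q: "q \<in> Gt"
      have "q ((1 / r) *\<^sub>R (T r (Ii x h) - Ii x h) - 0) \<le> 2 * K * norm x"
      proof (rule bound_lim[OF h r q])
        fix e' :: real assume e': "e' > 0"
        show "eventually (\<lambda>n. q ((1 / r) *\<^sub>R (T r (Rp x h (Suc n)) - Rp x h (Suc n)) - 0) \<le> 2 * K * norm x + e') sequentially"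
          using W1_small[OF h r q e', where x=x]
        proof eventually_elim
          case (elim n)
          have "q ((1 / r) *\<^sub>R W2 x h r (Suc n) - 0) = (1 / r) * q (W2 x h r (Suc n))"
            using sn_scale[OF Gt_sn[OF q]] r by simp
          also have "\<dots> \<le> (1 / r) * (r * (2 * K * norm x))"
            using W2_bound0[OF h r _ q K(1) Kr, of "Suc n" x] r by (intro mult_left_mono) auto
          also have "\<dots> = 2 * K * norm x" using r by simp
          finally have "q ((1 / r) *\<^sub>R W2 x h r (Suc n) - 0) \<le> 2 * K * norm x" .
          then show ?case using decomp_q[OF h r q, of x n 0] elim by linarith
        qed
      qed
      then show "q ((1 / r) *\<^sub>R (T r I - I)) \<le> 2 * K * norm x" unfolding I_def by simp
    qed
    then show "norm (T r I - I) / r \<le> 2 * K * norm x" using r by simp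
  qed
  have lim: "limitin tau (\<lambda>r. (1 / r) *\<^sub>R (T r I - I)) (T h x - x) (at_right 0)"
    unfolding tau_lim
  proof (intro ballI)
    fix q assume q: "q \<in> Gt"
    have sq: "seminorm q" using Gt_sn[OF q] .
    show "((\<lambda>r. q ((1 / r) *\<^sub>R (T r I - I) - (T h x - x))) \<longlongrightarrow> 0) (at_right 0)"
    proof (rule tendstoI)
      fix e :: real assume e: "e > 0"
      define e2 where "e2 = e / 4"
      have e2: "e2 > 0" unfolding e2_def using e by simp
      obtain d1 where d1: "d1 > 0" "\<forall>s\<ge>0. \<bar>s - h\<bar> < d1 \<longrightarrow> q (T s x - T h x) < e2"
        using orbit_cont[OF q _ e2, of h x] h by auto
      obtain d2 where d2: "d2 > 0" "\<forall>s\<ge>0. \<bar>s - 0\<bar> < d2 \<longrightarrow> q (T s x - T 0 x) < e2"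
        using orbit_cont[OF q _ e2, of 0 x] by auto
      define \<rho> where "\<rho> = min d1 d2"
      have \<rho>: "\<rho> > 0" unfolding \<rho>_def using d1 d2 by simp
      show "eventually (\<lambda>r. dist (q ((1 / r) *\<^sub>R (T r I - I) - (T h x - x))) 0 < e) (at_right 0)"
        using eventually_at_right_real[OF \<rho>]
      proof eventually_elim
        case (elim r)
        have r: "r > 0" "r < \<rho>" using elim by auto
        have a: "\<forall>s\<in>{0..r}. q (T (h + s) x - T h x) \<le> e2"
        proof
          fix s assume s: "s \<in> {0..r}"
          then have "\<bar>(h + s) - h\<bar> < d1" using r unfolding \<rho>_def by auto
          then show "q (T (h + s) x - T h x) \<le> e2" using d1(2) s h by (meson less_imp_le add_nonneg_nonneg atLeastAtMost_iff less_imp_le)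
        qed
        have b: "\<forall>s\<in>{0..r}. q (T s x - x) \<le> e2"
        proof
          fix s assume s: "s \<in> {0..r}"
          then have "\<bar>s - 0\<bar> < d2" using r unfolding \<rho>_def by auto
          then show "q (T s x - x) \<le> e2" using d2(2) s by (metis T0x atLeastAtMost_iff less_imp_le)
        qed
        define Q where "Q = q (T h x - x)"
        have Q: "Q \<ge> 0" unfolding Q_def using sn_nonneg[OF sq] .
        have lim0: "(\<lambda>n. (h * Q / r) * inverse (real (Suc n))) \<longlonglongrightarrow> (h * Q / r) * 0"
          by (rule tendsto_mult[OF tendsto_const LIMSEQ_inverse_real_of_nat])
        have bq: "q ((1 / r) *\<^sub>R (T r (Ii x h) - Ii x h) - (T h x - x)) \<le> e2 + e2"
        proof (rule bound_lim[OF h r(1) q])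
          fix e' :: real assume e': "e' > 0"
          have e'2: "e' / 2 > 0" using e' by simp
          have lim0': "(\<lambda>n. (h * Q / r) * inverse (real (Suc n))) \<longlonglongrightarrow> 0" using lim0 by simp
          have ev2: "eventually (\<lambda>n. (h * Q / r) * inverse (real (Suc n)) < e' / 2) sequentially"
            by (rule order_tendstoD(2)[OF lim0' e'2])
          show "eventually (\<lambda>n. q ((1 / r) *\<^sub>R (T r (Rp x h (Suc n)) - Rp x h (Suc n)) - (T h x - x)) \<le> e2 + e2 + e') sequentially"
            using W1_small[OF h r(1) q e'2, where x=x] ev2
          proof eventually_elim
            case (elim n)
            have w2: "q ((1 / r) *\<^sub>R W2 x h r (Suc n) - (T h x - x)) \<le> (e2 + e2) + (h / real (Suc n)) / r * Q"
              unfolding Q_def by (rule W2_bound1[OF h r(1) _ q _ a _ b]) (use e2 in auto)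
            have "(h / real (Suc n)) / r * Q = (h * Q / r) * inverse (real (Suc n))"
              by (simp add: field_simps)
            then show ?case using decomp_q[OF h r(1) q, of x n "T h x - x"] elim w2 by linarith
          qed
        qed
        then have "q ((1 / r) *\<^sub>R (T r I - I) - (T h x - x)) < e" unfolding I_def e2_def using e by simp
        then show ?case using sn_nonneg[OF sq] by simp
      qed
    qed
  qed
  have "I \<in> D" by (subst gen_D) (use lim bdd in blast)
  then show ?thesis unfolding I_def .
qed

end

context SG2 begin

lemma contr_all:
  assumes p: "p \<in> Gg" and t: "t \<ge> 0"
  shows "p (T t x) \<le> p x"
proof -
  have sp: "seminorm p" using Gg_sn[OF p] .
  define hs where "hs m = inverse (real (Suc m))" for m
  have hs: "hs m > 0" "hs m \<le> 1" for m unfolding hs_def by (auto simp: field_simps)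
  have hs0: "hs \<longlonglongrightarrow> 0" unfolding hs_def by (rule LIMSEQ_inverse_real_of_nat)
  define xs where "xs m = (1 / hs m) *\<^sub>R Ii x (hs m)" for m
  obtain K where K: "K \<ge> 0" "\<forall>t w. 0 \<le> t \<longrightarrow> t \<le> 1 \<longrightarrow> norm (T t w) \<le> K * norm w"
    using Tbound[of 1] by blast
  obtain Kt where Kt: "Kt \<ge> 0" "\<forall>s w. 0 \<le> s \<longrightarrow> s \<le> t \<longrightarrow> norm (T s w) \<le> Kt * norm w"
    using Tbound[of t] by blast
  have nxs: "norm (xs m) \<le> K * norm x" for m
  proof -
    have Km: "\<forall>t w. 0 \<le> t \<longrightarrow> t \<le> hs m \<longrightarrow> norm (T t w) \<le> K * norm w" using K hs[of m] by auto
    have "norm (Ii x (hs m)) \<le> hs m * (K * norm x)" by (rule Ii_norm[OF hs(1) Km])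
    then show ?thesis unfolding xs_def using hs[of m] by (simp add: field_simps)
  qed
  have bxs: "bounded (range xs)" unfolding bounded_iff using nxs by blast
  have lxs: "limitin tau xs x sequentially" unfolding tau_lim
  proof (intro ballI)
    fix q assume q: "q \<in> Gt"
    have sq: "seminorm q" using Gt_sn[OF q] .
    show "((\<lambda>m. q (xs m - x)) \<longlongrightarrow> 0) sequentially"
    proof (rule tendstoI)
      fix e :: real assume e: "e > 0"
      have e2: "e / 2 > 0" using e by simp
      obtain d where d: "d > 0" "\<forall>s\<ge>0. \<bar>s - 0\<bar> < d \<longrightarrow> q (T s x - T 0 x) < e / 2"
        using orbit_cont[OF q _ e2, of 0 x] by auto
      have "eventually (\<lambda>m. hs m < d) sequentially" using order_tendstoD(2)[OF hs0 d(1)] .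
      then show "eventually (\<lambda>m. dist (q (xs m - x)) 0 < e) sequentially"
      proof eventually_elim
        case (elim m)
        have b: "\<forall>s\<in>{0..hs m}. q (T s x - x) \<le> e / 2"
        proof
          fix s assume s: "s \<in> {0..hs m}"
          then have "\<bar>s - 0\<bar> < d" using elim by auto
          then show "q (T s x - x) \<le> e / 2" using d(2) s by (metis T0x atLeastAtMost_iff less_imp_le)
        qed
        have mean: "q (Ii x (hs m) - hs m *\<^sub>R x) \<le> hs m * (e / 2)" by (rule Ii_mean[OF hs(1) q b])
        have eqx: "xs m - x = (1 / hs m) *\<^sub>R (Ii x (hs m) - hs m *\<^sub>R x)"
          unfolding xs_def using hs(1)[of m] by (simp add: algebra_simps)
        have "q (xs m - x) = (1 / hs m) * q (Ii x (hs m) - hs m *\<^sub>R x)"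
          unfolding eqx using sn_scale[OF sq] hs(1)[of m] by simp
        also have "\<dots> \<le> (1 / hs m) * (hs m * (e / 2))"
          by (rule mult_left_mono[OF mean]) (use hs(1)[of m] in simp)
        also have "\<dots> = e / 2" using hs(1)[of m] by simp
        finally show ?case using e sn_nonneg[OF sq] by simp
      qed
    qed
  qed
  have Tlim: "\<forall>q\<in>Gt. ((\<lambda>m. q (T t (xs m) - T t x)) \<longlongrightarrow> 0) sequentially"
  proof (intro ballI)
    fix q assume q: "q \<in> Gt"
    show "((\<lambda>m. q (T t (xs m) - T t x)) \<longlongrightarrow> 0) sequentially"
    proof (rule tendstoI)
      fix e :: real assume e: "e > 0"
      have "eventually (\<lambda>m. \<forall>s\<in>{0..t}. q (T s (xs m - x)) < e) sequentially"
        by (rule bicont_seq[OF bxs lxs t q e])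
      then show "eventually (\<lambda>m. dist (q (T t (xs m) - T t x)) 0 < e) sequentially"
      proof eventually_elim
        case (elim m)
        have "q (T t (xs m - x)) < e" using elim t by auto
        moreover have "T t (xs m - x) = T t (xs m) - T t x" by (rule T_diff[OF t])
        ultimately show ?case using sn_nonneg[OF Gt_sn[OF q]] by simp
      qed
    qed
  qed
  have p1: "((\<lambda>m. p (xs m - x)) \<longlongrightarrow> 0) sequentially"
  proof (rule transfer[OF gGg Gg_all _ _ _ _ p])
    show "bounded (insert x (cball 0 (K * norm x)))" by simp
    show "eventually (\<lambda>m. xs m \<in> insert x (cball 0 (K * norm x))) sequentially" using nxs by simp
    show "x \<in> insert x (cball 0 (K * norm x))" by simp
    show "\<forall>q\<in>Gt. ((\<lambda>m. q (xs m - x)) \<longlongrightarrow> 0) sequentially" using lxs tau_lim by blast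
  qed
  have p2: "((\<lambda>m. p (T t (xs m) - T t x)) \<longlongrightarrow> 0) sequentially"
  proof (rule transfer[OF gGg Gg_all _ _ _ Tlim p])
    show "bounded (insert (T t x) (cball 0 (Kt * (K * norm x))))" by simp
    show "eventually (\<lambda>m. T t (xs m) \<in> insert (T t x) (cball 0 (Kt * (K * norm x)))) sequentially"
    proof (intro always_eventually allI)
      fix m
      have "norm (T t (xs m)) \<le> Kt * norm (xs m)" using Kt t by simp
      also have "\<dots> \<le> Kt * (K * norm x)" using nxs Kt(1) by (intro mult_left_mono) auto
      finally show "T t (xs m) \<in> insert (T t x) (cball 0 (Kt * (K * norm x)))" by simp
    qed
    show "T t x \<in> insert (T t x) (cball 0 (Kt * (K * norm x)))" by simp
  qed
  have contr_m: "p (T t (xs m)) \<le> p (xs m)" for m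
  proof -
    have "p (T t (Ii x (hs m))) \<le> p (Ii x (hs m))" by (rule D_contr[OF Ii_D[OF hs(1)] p t])
    then have "(1 / hs m) * p (T t (Ii x (hs m))) \<le> (1 / hs m) * p (Ii x (hs m))"
      using hs(1)[of m] by (intro mult_left_mono) auto
    then show ?thesis unfolding xs_def using T_scale[OF t] sn_scale[OF sp] hs(1)[of m] by simp
  qed
  have lim: "((\<lambda>m. p x + p (xs m - x) + p (T t (xs m) - T t x)) \<longlongrightarrow> p x + 0 + 0) sequentially"
    by (intro tendsto_intros p1 p2)
  have "p (T t x) \<le> p x + 0 + 0"
  proof (rule tendsto_lowerbound[OF lim])
    show "eventually (\<lambda>m. p (T t x) \<le> p x + p (xs m - x) + p (T t (xs m) - T t x)) sequentially"
    proof (intro always_eventually allI)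
      fix m
      have "p (T t x) \<le> p (T t (xs m)) + p (T t x - T t (xs m))"
        using sn_add[OF sp, of "T t (xs m)" "T t x - T t (xs m)"] by simp
      also have "\<dots> \<le> p (xs m) + p (T t (xs m) - T t x)"
        using contr_m[of m] sn_commute[OF sp, of "T t x" "T t (xs m)"] by simp
      also have "p (xs m) \<le> p x + p (xs m - x)"
        using sn_add[OF sp, of x "xs m - x"] by simp
      finally show "p (T t x) \<le> p x + p (xs m - x) + p (T t (xs m) - T t x)" by simp
    qed
  qed simp
  then show ?thesis by simp
qed

lemma hard_dir: "equicontinuous_semigroup gam T"
  unfolding equicontinuous_semigroup_def
proof (intro exI[of _ Gg] conjI dGg gGg ballI)
  fix p assume p: "p \<in> Gg"
  show "\<exists>q\<in>Gg. \<exists>C\<ge>0. \<forall>t\<ge>0. \<forall>x. p (T t x) \<le> C * q x"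
    using contr_all[OF p] p by (intro bexI[of _ p] exI[of _ 1]) auto
qed

end


theorem proposition3p23:
  fixes \<Gamma>\<tau> :: "('a::banach \<Rightarrow> real) set"
    and \<tau> \<gamma> :: "'a topology"
    and T :: "real \<Rightarrow> 'a \<Rightarrow> 'a"
    and D :: "'a set" and A :: "'a \<Rightarrow> 'a"
  assumes "saks_space \<Gamma>\<tau> \<tau>"
    and "mixed_topology \<tau> \<gamma>"
    and "tvs_complete \<gamma>"
    and "C_sequential \<gamma>"
    and "bi_continuous_semigroup \<tau> T"
    and "bi_generator \<tau> T D A"
  shows "equicontinuous_semigroup \<gamma> T \<longleftrightarrow>
         (\<exists>\<Gamma>\<gamma>. directed_seminorms \<Gamma>\<gamma> \<and> generates \<Gamma>\<gamma> \<gamma> \<and> dissipative_wrt \<Gamma>\<gamma> D A)"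
proof -
  interpret SG "\<Gamma>\<tau>" "\<tau>" "\<gamma>" T D A
    by unfold_locales (fact assms)+
  show ?thesis
  proof
    assume "equicontinuous_semigroup \<gamma> T"
    then show "\<exists>\<Gamma>\<gamma>. directed_seminorms \<Gamma>\<gamma> \<and> generates \<Gamma>\<gamma> \<gamma> \<and> dissipative_wrt \<Gamma>\<gamma> D A"
      by (rule easy_dir)
  next
    assume "\<exists>\<Gamma>\<gamma>. directed_seminorms \<Gamma>\<gamma> \<and> generates \<Gamma>\<gamma> \<gamma> \<and> dissipative_wrt \<Gamma>\<gamma> D A"
    then obtain G where G: "directed_seminorms G" "generates G \<gamma>" "dissipative_wrt G D A"
      by blast
    interpret SG2 "\<Gamma>\<tau>" "\<tau>" "\<gamma>" T D A G
      by unfold_locales (fact G)+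
    show "equicontinuous_semigroup \<gamma> T" by (rule hard_dir)
  qed
qed

end
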